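(* Let $n>4$ and let $L$ and ${}^*L=e^{\sigma(x)}L+\beta$ be as in the context. Then $(M,L)$ is $S_4$-like if and only if $(M,{}^*L)$ is $S_4$-like.
   Context: $M$ is a smooth manifold of dimension $n$ with local coordinates $(x^i)$ and induced fiber coordinates $(y^i)$ on $TM$. $L(x,y)$ is a Finsler metric: positive and smooth for $y\neq0$, positively homogeneous of degree 1 in $y$, with positive definite fundamental tensor $g_{ij}=\frac12\frac{\partial^2L^2}{\partial y^i\partial y^j}$ and inverse $g^{ij}$. $\sigma(x)$ is a smooth function on $M$ and $\beta(x,y)=b_i(x)y^i$ is a 1-form; the conformal $\beta$-change is ${}^*L=e^{\sigma(x)}L+\beta$, assumed to be again a Finsler metric. Notation: $l_i=\partial L/\partial y^i$, $h_{ij}=g_{ij}-l_il_j$, $c_{ijk}=\frac12\partial g_{ij}/\partial y^k$, $c_h{}^r{}_k=g^{rs}c_{hsk}$, $S_{hijk}=c_{ijr}c_h{}^r{}_k-c_{ikr}c_h{}^r{}_j$ (third curvature tensor), $S_{ik}=g^{hj}S_{hijk}$, $S=g^{ik}S_{ik}$, and $M_{ij}=\frac{1}{n-3}\big[S_{ij}-\frac{S\,h_{ij}}{2(n-2)}\big]$. Quantities built from ${}^*L$ by the same formulas (using ${}^*g_{ij}$ and its inverse ${}^*g^{ij}$) are denoted with a left asterisk. A Finsler space of dimension $n>4$ is $S_4$-like if $S_{hijk}=h_{jh}M_{ik}+h_{ik}M_{jh}-h_{hk}M_{ij}-h_{ij}M_{hk}$. *)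

theory Defs
  imports "HOL-Analysis.Analysis"
begin

definition pdir :: "'a::euclidean_space \<Rightarrow> ('a \<Rightarrow> real) \<Rightarrow> 'a \<Rightarrow> real" where
  "pdir v f p = deriv (\<lambda>t. f (p + t *\<^sub>R v)) 0"

fun iter_pdir :: "'a::euclidean_space list \<Rightarrow> ('a \<Rightarrow> real) \<Rightarrow> 'a \<Rightarrow> real" where
  "iter_pdir [] f = f"
| "iter_pdir (v # vs) f = pdir v (iter_pdir vs f)"

definition smooth_on :: "'a::euclidean_space set \<Rightarrow> ('a \<Rightarrow> real) \<Rightarrow> bool" where
  "smooth_on S f \<longleftrightarrow>
     (\<forall>vs. set vs \<subseteq> Basis \<longrightarrow> (\<forall>p\<in>S. iter_pdir vs f differentiable (at p)))"

definition pd :: "'n::finite \<Rightarrow> (real^'n \<Rightarrow> real) \<Rightarrow> real^'n \<Rightarrow> real" where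
  "pd i f y = pdir (axis i 1) f y"

text \<open>All quantities below are in local coordinates (x^i) on a chart domain
  U \<subseteq> R^n, with fibre coordinates y; L x y is the Finsler function.\<close>

definition gt :: "(real^'n \<Rightarrow> real^'n \<Rightarrow> real) \<Rightarrow> real^'n \<Rightarrow> real^'n \<Rightarrow> 'n::finite \<Rightarrow> 'n \<Rightarrow> real" where
  "gt L x y i j = 1/2 * pd i (pd j (\<lambda>z. (L x z)^2)) y"

definition gmat :: "(real^'n \<Rightarrow> real^'n \<Rightarrow> real) \<Rightarrow> real^'n \<Rightarrow> real^'n \<Rightarrow> real^'n^'n::finite" where
  "gmat L x y = (\<chi> i j. gt L x y i j)"

definition ginv :: "(real^'n \<Rightarrow> real^'n \<Rightarrow> real) \<Rightarrow> real^'n \<Rightarrow> real^'n \<Rightarrow> 'n::finite \<Rightarrow> 'n \<Rightarrow> real" where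
  "ginv L x y i j = matrix_inv (gmat L x y) $ i $ j"

definition lt :: "(real^'n \<Rightarrow> real^'n \<Rightarrow> real) \<Rightarrow> real^'n \<Rightarrow> real^'n \<Rightarrow> 'n::finite \<Rightarrow> real" where
  "lt L x y i = pd i (L x) y"

definition ht :: "(real^'n \<Rightarrow> real^'n \<Rightarrow> real) \<Rightarrow> real^'n \<Rightarrow> real^'n \<Rightarrow> 'n::finite \<Rightarrow> 'n \<Rightarrow> real" where
  "ht L x y i j = gt L x y i j - lt L x y i * lt L x y j"

definition ct :: "(real^'n \<Rightarrow> real^'n \<Rightarrow> real) \<Rightarrow> real^'n \<Rightarrow> real^'n \<Rightarrow> 'n::finite \<Rightarrow> 'n \<Rightarrow> 'n \<Rightarrow> real" where
  "ct L x y i j k = 1/2 * pd k (\<lambda>z. gt L x z i j) y"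

definition cmix :: "(real^'n \<Rightarrow> real^'n \<Rightarrow> real) \<Rightarrow> real^'n \<Rightarrow> real^'n \<Rightarrow> 'n::finite \<Rightarrow> 'n \<Rightarrow> 'n \<Rightarrow> real" where
  "cmix L x y h r k = (\<Sum>s\<in>UNIV. ginv L x y r s * ct L x y h s k)"

definition S3 :: "(real^'n \<Rightarrow> real^'n \<Rightarrow> real) \<Rightarrow> real^'n \<Rightarrow> real^'n \<Rightarrow> 'n::finite \<Rightarrow> 'n \<Rightarrow> 'n \<Rightarrow> 'n \<Rightarrow> real" where
  "S3 L x y h i j k =
     (\<Sum>r\<in>UNIV. ct L x y i j r * cmix L x y h r k - ct L x y i k r * cmix L x y h r j)"

definition Sric :: "(real^'n \<Rightarrow> real^'n \<Rightarrow> real) \<Rightarrow> real^'n \<Rightarrow> real^'n \<Rightarrow> 'n::finite \<Rightarrow> 'n \<Rightarrow> real" where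
  "Sric L x y i k = (\<Sum>h\<in>UNIV. \<Sum>j\<in>UNIV. ginv L x y h j * S3 L x y h i j k)"

definition Sscal :: "(real^'n \<Rightarrow> real^'n \<Rightarrow> real) \<Rightarrow> real^'n \<Rightarrow> real^'n::finite \<Rightarrow> real" where
  "Sscal L x y = (\<Sum>i\<in>UNIV. \<Sum>k\<in>UNIV. ginv L x y i k * Sric L x y i k)"

definition Mt :: "(real^'n \<Rightarrow> real^'n \<Rightarrow> real) \<Rightarrow> real^'n \<Rightarrow> real^'n \<Rightarrow> 'n::finite \<Rightarrow> 'n \<Rightarrow> real" where
  "Mt L x y i j = 1 / (real CARD('n) - 3) *
     (Sric L x y i j - Sscal L x y * ht L x y i j / (2 * (real CARD('n) - 2)))"

definition finsler_metric :: "(real^'n::finite) set \<Rightarrow> (real^'n \<Rightarrow> real^'n \<Rightarrow> real) \<Rightarrow> bool" where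
  "finsler_metric U L \<longleftrightarrow>
     smooth_on (U \<times> (UNIV - {0})) (\<lambda>(x, y). L x y) \<and>
     (\<forall>x\<in>U. \<forall>y. y \<noteq> 0 \<longrightarrow> L x y > 0) \<and>
     (\<forall>x\<in>U. \<forall>y. \<forall>t::real. t > 0 \<longrightarrow> L x (t *\<^sub>R y) = t * L x y) \<and>
     (\<forall>x\<in>U. \<forall>y. y \<noteq> 0 \<longrightarrow>
        (\<forall>v::real^'n. v \<noteq> 0 \<longrightarrow> (\<Sum>i\<in>UNIV. \<Sum>j\<in>UNIV. gt L x y i j * v$i * v$j) > 0))"

definition S4_like :: "(real^'n::finite) set \<Rightarrow> (real^'n \<Rightarrow> real^'n \<Rightarrow> real) \<Rightarrow> bool" where
  "S4_like U L \<longleftrightarrow>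
     (\<forall>x\<in>U. \<forall>y. y \<noteq> 0 \<longrightarrow> (\<forall>h i j k.
        S3 L x y h i j k =
          ht L x y j h * Mt L x y i k + ht L x y i k * Mt L x y j h
          - ht L x y h k * Mt L x y i j - ht L x y i j * Mt L x y h k))"

end

theory Submission
  imports Defs
begin


definition gA :: "('n::finite \<Rightarrow> real) \<Rightarrow> real \<Rightarrow> ('n \<Rightarrow> 'n \<Rightarrow> real) \<Rightarrow> 'n \<Rightarrow> 'n \<Rightarrow> real" where
  "gA l Lv H i j = l i * l j + Lv * H i j"
definition hA :: "('n::finite \<Rightarrow> real) \<Rightarrow> real \<Rightarrow> ('n \<Rightarrow> 'n \<Rightarrow> real) \<Rightarrow> 'n \<Rightarrow> 'n \<Rightarrow> real" where
  "hA l Lv H i j = gA l Lv H i j - l i * l j"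
definition cA :: "('n::finite \<Rightarrow> real) \<Rightarrow> real \<Rightarrow> ('n \<Rightarrow> 'n \<Rightarrow> real) \<Rightarrow> ('n \<Rightarrow> 'n \<Rightarrow> 'n \<Rightarrow> real) \<Rightarrow> 'n \<Rightarrow> 'n \<Rightarrow> 'n \<Rightarrow> real" where
  "cA l Lv H T i j k = (H k i * l j + l i * H k j + l k * H i j + Lv * T k i j) / 2"
definition BG :: "('n::finite \<Rightarrow> 'n \<Rightarrow> real) \<Rightarrow> ('n \<Rightarrow> real) \<Rightarrow> ('n \<Rightarrow> real) \<Rightarrow> real" where
  "BG G X Y = (\<Sum>r\<in>UNIV. \<Sum>s\<in>UNIV. X r * G r s * Y s)"
definition S3g :: "('n::finite \<Rightarrow> 'n \<Rightarrow> real) \<Rightarrow> ('n \<Rightarrow> 'n \<Rightarrow> 'n \<Rightarrow> real) \<Rightarrow> 'n \<Rightarrow> 'n \<Rightarrow> 'n \<Rightarrow> 'n \<Rightarrow> real" where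
  "S3g G C h i j k = (\<Sum>r\<in>UNIV. C i j r * (\<Sum>s\<in>UNIV. G r s * C h s k) - C i k r * (\<Sum>s\<in>UNIV. G r s * C h s j))"
definition Sricg :: "('n::finite \<Rightarrow> 'n \<Rightarrow> real) \<Rightarrow> ('n \<Rightarrow> 'n \<Rightarrow> 'n \<Rightarrow> real) \<Rightarrow> 'n \<Rightarrow> 'n \<Rightarrow> real" where
  "Sricg G C i k = (\<Sum>h\<in>UNIV. \<Sum>j\<in>UNIV. G h j * S3g G C h i j k)"
definition Sscalg :: "('n::finite \<Rightarrow> 'n \<Rightarrow> real) \<Rightarrow> ('n \<Rightarrow> 'n \<Rightarrow> 'n \<Rightarrow> real) \<Rightarrow> real" where
  "Sscalg G C = (\<Sum>i\<in>UNIV. \<Sum>k\<in>UNIV. G i k * Sricg G C i k)"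
definition Mtg :: "('n::finite \<Rightarrow> 'n \<Rightarrow> real) \<Rightarrow> ('n \<Rightarrow> 'n \<Rightarrow> 'n \<Rightarrow> real) \<Rightarrow> ('n \<Rightarrow> 'n \<Rightarrow> real) \<Rightarrow> 'n \<Rightarrow> 'n \<Rightarrow> real" where
  "Mtg G C hh i j = 1 / (real CARD('n) - 3) *
     (Sricg G C i j - Sscalg G C * hh i j / (2 * (real CARD('n) - 2)))"
definition wedge :: "('n::finite \<Rightarrow> 'n \<Rightarrow> real) \<Rightarrow> ('n \<Rightarrow> 'n \<Rightarrow> real) \<Rightarrow> 'n \<Rightarrow> 'n \<Rightarrow> 'n \<Rightarrow> 'n \<Rightarrow> real" where
  "wedge hh N h i j k = hh j h * N i k + hh i k * N j h - hh h k * N i j - hh i j * N h k"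
definition S4g :: "('n::finite \<Rightarrow> 'n \<Rightarrow> real) \<Rightarrow> ('n \<Rightarrow> 'n \<Rightarrow> 'n \<Rightarrow> real) \<Rightarrow> ('n \<Rightarrow> 'n \<Rightarrow> real) \<Rightarrow> bool" where
  "S4g G C hh \<longleftrightarrow> (\<forall>h i j k. S3g G C h i j k = wedge hh (Mtg G C hh) h i j k)"

lemma BG_add_left: "BG G (\<lambda>r. X r + Y r) Z = BG G X Z + BG G Y Z"
  unfolding BG_def by (simp add: distrib_right sum.distrib)
lemma BG_diff_left: "BG G (\<lambda>r. X r - Y r) Z = BG G X Z - BG G Y Z"
  unfolding BG_def by (simp add: left_diff_distrib sum_subtractf)
lemma BG_scale_left: "BG G (\<lambda>r. a * X r) Z = a * BG G X Z"
  unfolding BG_def by (simp add: sum_distrib_left mult.assoc)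
lemma BG_add_right: "BG G Z (\<lambda>r. X r + Y r) = BG G Z X + BG G Z Y"
  unfolding BG_def by (simp add: distrib_left sum.distrib)
lemma BG_diff_right: "BG G Z (\<lambda>r. X r - Y r) = BG G Z X - BG G Z Y"
  unfolding BG_def by (simp add: right_diff_distrib sum_subtractf)
lemma BG_scale_right: "BG G Z (\<lambda>r. a * X r) = a * BG G Z X"
  unfolding BG_def by (simp add: sum_distrib_left mult_ac)

lemma delta_sum1 [simp]: "(\<Sum>j\<in>UNIV. (if i = j then 1 else 0) * f j) = (f (i::_::finite) :: real)"
proof -
  have "(\<Sum>j\<in>UNIV. (if i = j then 1 else 0) * f j) = (\<Sum>j\<in>UNIV. if i = j then f j else 0)"
    by (rule sum.cong) auto
  then show ?thesis by simp
qed
lemma delta_sum2 [simp]: "(\<Sum>j\<in>UNIV. f j * (if j = i then 1 else 0)) = (f (i::_::finite) :: real)"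
proof -
  have "(\<Sum>j\<in>UNIV. f j * (if j = i then 1 else 0)) = (\<Sum>j\<in>UNIV. (if i = j then 1 else 0) * f j)"
    by (rule sum.cong) auto
  then show ?thesis by simp
qed

lemma swap3: "(\<Sum>k\<in>UNIV. (\<Sum>r\<in>UNIV. a r * (\<Sum>s\<in>UNIV. b r s * c s k)) * (z k::real))
   = (\<Sum>r\<in>UNIV. a r * (\<Sum>s\<in>UNIV. b r s * (\<Sum>k\<in>UNIV. c s k * z k)))"
proof -
  have "(\<Sum>k\<in>UNIV. (\<Sum>r\<in>UNIV. a r * (\<Sum>s\<in>UNIV. b r s * c s k)) * z k)
      = (\<Sum>k\<in>UNIV. \<Sum>r\<in>UNIV. \<Sum>s\<in>UNIV. a r * b r s * c s k * z k)"
    by (simp add: sum_distrib_left sum_distrib_right mult.assoc)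
  also have "\<dots> = (\<Sum>r\<in>UNIV. \<Sum>k\<in>UNIV. \<Sum>s\<in>UNIV. a r * b r s * c s k * z k)"
    by (rule sum.swap)
  also have "\<dots> = (\<Sum>r\<in>UNIV. \<Sum>s\<in>UNIV. \<Sum>k\<in>UNIV. a r * b r s * c s k * z k)"
    by (rule sum.cong[OF refl], rule sum.swap)
  also have "\<dots> = (\<Sum>r\<in>UNIV. a r * (\<Sum>s\<in>UNIV. b r s * (\<Sum>k\<in>UNIV. c s k * z k)))"
    by (simp add: sum_distrib_left sum_distrib_right mult.assoc)
  finally show ?thesis .
qed

lemma swap2: "(\<Sum>k\<in>UNIV. (\<Sum>r\<in>UNIV. c k r * d r) * (z k::real))
   = (\<Sum>r\<in>UNIV. (\<Sum>k\<in>UNIV. c k r * z k) * d r)"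
proof -
  have "(\<Sum>k\<in>UNIV. (\<Sum>r\<in>UNIV. c k r * d r) * z k) = (\<Sum>k\<in>UNIV. \<Sum>r\<in>UNIV. c k r * z k * d r)"
    by (simp add: sum_distrib_right sum_distrib_left mult_ac)
  also have "\<dots> = (\<Sum>r\<in>UNIV. \<Sum>k\<in>UNIV. c k r * z k * d r)" by (rule sum.swap)
  also have "\<dots> = (\<Sum>r\<in>UNIV. (\<Sum>k\<in>UNIV. c k r * z k) * d r)"
    by (simp add: sum_distrib_right)
  finally show ?thesis .
qed

lemma swap2': "(\<Sum>r\<in>UNIV. \<Sum>s\<in>UNIV. X r * G r s * (Y s::real)) = (\<Sum>s\<in>UNIV. (\<Sum>r\<in>UNIV. X r * G r s) * Y s)"
  by (subst sum.swap) (simp add: sum_distrib_right)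

lemma swapC: "(\<Sum>m\<in>UNIV. (\<Sum>k\<in>UNIV. a k * b k m) * c m) = (\<Sum>k\<in>UNIV. a k * (\<Sum>m\<in>UNIV. b k m * (c m::real)))"
proof -
  have "(\<Sum>m\<in>UNIV. (\<Sum>k\<in>UNIV. a k * b k m) * c m) = (\<Sum>m\<in>UNIV. \<Sum>k\<in>UNIV. a k * (b k m * c m))"
    by (simp only: sum_distrib_right mult.assoc)
  also have "\<dots> = (\<Sum>k\<in>UNIV. \<Sum>m\<in>UNIV. a k * (b k m * c m))" by (rule sum.swap)
  also have "\<dots> = (\<Sum>k\<in>UNIV. a k * (\<Sum>m\<in>UNIV. b k m * (c m::real)))"
    by (simp only: sum_distrib_left)
  finally show ?thesis .
qed

lemma BG_alt: "BG G X Y = (\<Sum>r\<in>UNIV. X r * (\<Sum>s\<in>UNIV. G r s * Y s))"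
  unfolding BG_def by (simp add: sum_distrib_left mult.assoc)

locale fd =
  fixes y :: "real^'n::finite" and Lv :: real and l :: "'n \<Rightarrow> real"
    and H :: "'n \<Rightarrow> 'n \<Rightarrow> real" and T :: "'n \<Rightarrow> 'n \<Rightarrow> 'n \<Rightarrow> real"
    and G :: "'n \<Rightarrow> 'n \<Rightarrow> real"
  assumes Lpos: "Lv \<noteq> 0"
    and Hsym: "\<And>i j. H i j = H j i"
    and Tsym1: "\<And>i j k. T i j k = T j i k" and Tsym2: "\<And>i j k. T i j k = T i k j"
    and El: "(\<Sum>i\<in>UNIV. l i * y$i) = Lv"
    and EH: "\<And>i. (\<Sum>j\<in>UNIV. H i j * y$j) = 0"
    and ET: "\<And>i j. (\<Sum>k\<in>UNIV. T i j k * y$k) = - H i j"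
    and GR: "\<And>i k. (\<Sum>j\<in>UNIV. gA l Lv H i j * G j k) = (if i = k then 1 else 0)"
    and GL: "\<And>i k. (\<Sum>j\<in>UNIV. G i j * gA l Lv H j k) = (if i = k then 1 else 0)"
begin

lemma g_sym: "gA l Lv H i j = gA l Lv H j i"
  unfolding gA_def using Hsym[of i j] by simp

lemma GR': "(\<Sum>k\<in>UNIV. G k j * gA l Lv H k m) = (if j = m then 1 else 0)"
proof -
  have "(\<Sum>k\<in>UNIV. G k j * gA l Lv H k m) = (\<Sum>k\<in>UNIV. gA l Lv H m k * G k j)"
    by (intro sum.cong refl) (metis g_sym mult.commute)
  then show ?thesis using GR[of m j] by (simp add: eq_commute)
qed

lemma G_sym: "G i j = G j i"
proof -
  have "G j i = (\<Sum>m\<in>UNIV. (if j = m then 1 else 0) * G m i)" by simp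
  also have "\<dots> = (\<Sum>m\<in>UNIV. (\<Sum>k\<in>UNIV. G k j * gA l Lv H k m) * G m i)"
    using GR' by simp
  also have "\<dots> = (\<Sum>k\<in>UNIV. G k j * (\<Sum>m\<in>UNIV. gA l Lv H k m * G m i))"
    by (rule swapC)
  also have "\<dots> = G i j" using GR by (simp add: mult_ac)
  finally show ?thesis by simp
qed

lemma gy: "(\<Sum>j\<in>UNIV. gA l Lv H i j * y$j) = Lv * l i"
proof -
  have "(\<Sum>j\<in>UNIV. gA l Lv H i j * y$j) = (\<Sum>j\<in>UNIV. l i * (l j * y$j) + Lv * (H i j * y$j))"
    unfolding gA_def by (simp add: algebra_simps)
  also have "\<dots> = l i * (\<Sum>j\<in>UNIV. l j * y$j) + Lv * (\<Sum>j\<in>UNIV. H i j * y$j)"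
    by (simp add: sum.distrib sum_distrib_left)
  finally have "(\<Sum>j\<in>UNIV. gA l Lv H i j * y$j) = l i * (\<Sum>j\<in>UNIV. l j * y$j) + Lv * (\<Sum>j\<in>UNIV. H i j * y$j)" .
  then show ?thesis using El EH by simp
qed

lemma Gl: "(\<Sum>j\<in>UNIV. G i j * l j) = y$i / Lv"
proof -
  have "y$i = (\<Sum>k\<in>UNIV. (\<Sum>j\<in>UNIV. G i j * gA l Lv H j k) * y$k)" using GL by simp
  also have "\<dots> = (\<Sum>j\<in>UNIV. G i j * (\<Sum>k\<in>UNIV. gA l Lv H j k * y$k))"
    by (rule swapC)
  also have "\<dots> = Lv * (\<Sum>j\<in>UNIV. G i j * l j)" using gy by (simp add: sum_distrib_left mult_ac)
  finally show ?thesis using Lpos by (simp add: field_simps)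
qed

lemma lG: "(\<Sum>j\<in>UNIV. l j * G j i) = y$i / Lv"
  using Gl[of i] by (simp add: G_sym mult.commute)

lemma hA_eq: "hA l Lv H i j = Lv * H i j"
  unfolding hA_def gA_def by simp

lemma h_sym: "hA l Lv H i j = hA l Lv H j i"
  using Hsym by (simp add: hA_eq)

lemma hG: "(\<Sum>j\<in>UNIV. hA l Lv H i j * G j k) = (if i = k then 1 else 0) - l i * y$k / Lv"
proof -
  have "(\<Sum>j\<in>UNIV. hA l Lv H i j * G j k) = (\<Sum>j\<in>UNIV. gA l Lv H i j * G j k - l i * (l j * G j k))"
    unfolding hA_def by (simp add: algebra_simps)
  also have "\<dots> = (\<Sum>j\<in>UNIV. gA l Lv H i j * G j k) - l i * (\<Sum>j\<in>UNIV. l j * G j k)"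
    by (simp add: sum_subtractf sum_distrib_left)
  finally have "(\<Sum>j\<in>UNIV. hA l Lv H i j * G j k) = (\<Sum>j\<in>UNIV. gA l Lv H i j * G j k) - l i * (\<Sum>j\<in>UNIV. l j * G j k)" .
  then show ?thesis using GR lG by simp
qed

lemma Gh: "(\<Sum>j\<in>UNIV. G i j * hA l Lv H j k) = (if i = k then 1 else 0) - y$i * l k / Lv"
  using hG[of k i] by (simp add: G_sym h_sym mult.commute eq_commute)

lemma hy: "(\<Sum>j\<in>UNIV. hA l Lv H i j * y$j) = 0"
  using EH by (simp add: hA_eq sum_distrib_left[symmetric] mult.assoc)


lemma C_sym1: "cA l Lv H T i j k = cA l Lv H T j i k"
  unfolding cA_def using Hsym[of k i] Hsym[of k j] Hsym[of i j] Tsym2[of k i j] by simp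

lemma C_sym2: "cA l Lv H T i j k = cA l Lv H T i k j"
proof -
  have "T k i j = T j i k" by (metis Tsym1 Tsym2)
  then show ?thesis
    unfolding cA_def using Hsym[of k i] Hsym[of j i] Hsym[of k j] Hsym[of i j] by (simp add: algebra_simps)
qed

lemma Cy: "(\<Sum>r\<in>UNIV. cA l Lv H T i j r * y$r) = 0"
proof -
  have a: "(\<Sum>r\<in>UNIV. H r a * y$r) = 0" for a using EH[of a] by (simp add: Hsym[of _ a])
  have b: "(\<Sum>r\<in>UNIV. T r i j * y$r) = - H i j"
    using ET[of i j] by (metis (no_types, lifting) Tsym1 Tsym2 sum.cong)
  have "(\<Sum>r\<in>UNIV. cA l Lv H T i j r * y$r) = (\<Sum>r\<in>UNIV. ((H r i * y$r) * l j + l i * (H r j * y$r) + (l r * y$r) * H i j + Lv * (T r i j * y$r)) / 2)"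
    by (rule sum.cong) (simp_all add: cA_def field_simps)
  also have "\<dots> = ((\<Sum>r\<in>UNIV. H r i * y$r) * l j + l i * (\<Sum>r\<in>UNIV. H r j * y$r) + (\<Sum>r\<in>UNIV. l r * y$r) * H i j + Lv * (\<Sum>r\<in>UNIV. T r i j * y$r)) / 2"
    by (simp only: sum_divide_distrib[symmetric] sum.distrib sum_distrib_left[symmetric] sum_distrib_right[symmetric])
  also have "\<dots> = 0" using a b El by simp
  finally show ?thesis .
qed

lemma BG_h_left: assumes "(\<Sum>r\<in>UNIV. X r * y$r) = 0"
  shows "BG G (hA l Lv H i) X = X i"
proof -
  have "BG G (hA l Lv H i) X = (\<Sum>s\<in>UNIV. (\<Sum>r\<in>UNIV. hA l Lv H i r * G r s) * X s)"
    unfolding BG_def by (rule swap2')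
  also have "\<dots> = (\<Sum>s\<in>UNIV. ((if i = s then 1 else 0) - l i * y$s / Lv) * X s)"
    by (simp only: hG)
  also have "\<dots> = (\<Sum>s\<in>UNIV. (if i = s then 1 else 0) * X s - l i / Lv * (X s * y$s))"
    by (rule sum.cong) (simp_all add: algebra_simps)
  also have "\<dots> = X i - l i / Lv * (\<Sum>s\<in>UNIV. X s * y$s)"
    by (simp add: sum_subtractf sum_distrib_left)
  finally show ?thesis using assms by simp
qed

lemma BG_sym: "BG G X Y = BG G Y X"
proof -
  have "BG G X Y = (\<Sum>s\<in>UNIV. \<Sum>r\<in>UNIV. X r * G r s * Y s)" unfolding BG_def by (rule sum.swap)
  also have "\<dots> = BG G Y X" unfolding BG_def
    by (intro sum.cong refl) (simp add: G_sym mult_ac)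
  finally show ?thesis .
qed

lemma BG_h_right: assumes "(\<Sum>r\<in>UNIV. X r * y$r) = 0"
  shows "BG G X (hA l Lv H i) = X i"
  using BG_h_left[OF assms] BG_sym by simp

lemma h_y': "(\<Sum>r\<in>UNIV. hA l Lv H i r * y$r) = 0" by (rule hy)

lemma S3_BG: "S3g G (cA l Lv H T) h i j k
   = BG G (cA l Lv H T i j) (cA l Lv H T h k) - BG G (cA l Lv H T i k) (cA l Lv H T h j)"
proof -
  have inner: "(\<Sum>s\<in>UNIV. G r s * cA l Lv H T a s b) = (\<Sum>s\<in>UNIV. G r s * cA l Lv H T a b s)" for r a b
    by (intro sum.cong refl) (metis C_sym2)
  show ?thesis unfolding S3g_def BG_alt inner by (simp only: sum_subtractf)
qed

lemma Sy: "(\<Sum>k\<in>UNIV. S3g G (cA l Lv H T) h i j k * y$k) = 0"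
proof -
  let ?C = "cA l Lv H T"
  have "(\<Sum>k\<in>UNIV. S3g G ?C h i j k * y$k)
     = (\<Sum>k\<in>UNIV. (\<Sum>r\<in>UNIV. ?C i j r * (\<Sum>s\<in>UNIV. G r s * ?C h s k)) * y$k)
       - (\<Sum>k\<in>UNIV. (\<Sum>r\<in>UNIV. ?C i k r * (\<Sum>s\<in>UNIV. G r s * ?C h s j)) * y$k)"
    unfolding S3g_def by (simp add: sum_subtractf left_diff_distrib)
  also have "\<dots> = (\<Sum>r\<in>UNIV. ?C i j r * (\<Sum>s\<in>UNIV. G r s * (\<Sum>k\<in>UNIV. ?C h s k * y$k)))
       - (\<Sum>r\<in>UNIV. (\<Sum>k\<in>UNIV. ?C i k r * y$k) * (\<Sum>s\<in>UNIV. G r s * ?C h s j))"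
  proof -
    have A: "(\<Sum>k\<in>UNIV. (\<Sum>r\<in>UNIV. ?C i j r * (\<Sum>s\<in>UNIV. G r s * ?C h s k)) * y$k)
       = (\<Sum>r\<in>UNIV. ?C i j r * (\<Sum>s\<in>UNIV. G r s * (\<Sum>k\<in>UNIV. ?C h s k * y$k)))" by (rule swap3)
    have B: "(\<Sum>k\<in>UNIV. (\<Sum>r\<in>UNIV. ?C i k r * (\<Sum>s\<in>UNIV. G r s * ?C h s j)) * y$k)
       = (\<Sum>r\<in>UNIV. (\<Sum>k\<in>UNIV. ?C i k r * y$k) * (\<Sum>s\<in>UNIV. G r s * ?C h s j))" by (rule swap2)
    show ?thesis unfolding A B ..
  qed
  also have "\<dots> = 0"
  proof -
    have "(\<Sum>k\<in>UNIV. ?C i k r * y$k) = 0" for r using Cy[of i r] C_sym2 by simp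
    moreover have "(\<Sum>k\<in>UNIV. ?C h s k * y$k) = 0" for s using Cy by simp
    ultimately show ?thesis by simp
  qed
  finally show ?thesis .
qed

lemma trace:
  assumes n: "real CARD('n) > 3"
    and S: "\<And>h i j k. S3g G C h i j k = wedge (hA l Lv H) N h i j k"
    and Nsym: "\<And>i j. N i j = N j i"
    and Ny: "\<And>i. (\<Sum>j\<in>UNIV. N i j * y$j) = 0"
  shows "Mtg G C (hA l Lv H) i j = N i j"
proof -
  let ?h = "hA l Lv H"
  let ?n = "real CARD('n)"
  define \<nu> where "\<nu> = (\<Sum>h\<in>UNIV. \<Sum>j\<in>UNIV. G h j * N j h)"
  have tr: "(\<Sum>h\<in>UNIV. \<Sum>j\<in>UNIV. G h j * ?h j h) = ?n - 1"
  proof -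
    have "(\<Sum>h\<in>UNIV. \<Sum>j\<in>UNIV. G h j * ?h j h) = (\<Sum>h\<in>UNIV. 1 - y$h * l h / Lv)"
      by (rule sum.cong) (simp_all add: Gh)
    also have "\<dots> = ?n - (\<Sum>h\<in>UNIV. l h * y$h) / Lv"
      by (simp add: sum_subtractf sum_divide_distrib[symmetric] mult.commute)
    finally show ?thesis using El Lpos by simp
  qed
  have P1: "(\<Sum>h\<in>UNIV. \<Sum>j\<in>UNIV. G h j * (?h j h * N i k)) = (?n - 1) * N i k" for i k
  proof -
    have "(\<Sum>h\<in>UNIV. \<Sum>j\<in>UNIV. G h j * (?h j h * N i k)) = (\<Sum>h\<in>UNIV. \<Sum>j\<in>UNIV. G h j * ?h j h) * N i k"
      by (simp only: sum_distrib_right mult.assoc)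
    then show ?thesis using tr by simp
  qed
  have P2: "(\<Sum>h\<in>UNIV. \<Sum>j\<in>UNIV. G h j * (?h i k * N j h)) = ?h i k * \<nu>" for i k
    unfolding \<nu>_def by (simp add: sum_distrib_left mult_ac)
  have P3: "(\<Sum>h\<in>UNIV. \<Sum>j\<in>UNIV. G h j * (?h h k * N i j)) = N i k" for i k
  proof -
    have "(\<Sum>h\<in>UNIV. \<Sum>j\<in>UNIV. G h j * (?h h k * N i j)) = (\<Sum>j\<in>UNIV. \<Sum>h\<in>UNIV. G h j * (?h h k * N i j))"
      by (rule sum.swap)
    also have "\<dots> = (\<Sum>j\<in>UNIV. (\<Sum>h\<in>UNIV. ?h k h * G h j) * N i j)"
      by (intro sum.cong refl) (simp add: sum_distrib_right sum_distrib_left h_sym[of _ k] mult_ac)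
    also have "\<dots> = (\<Sum>j\<in>UNIV. ((if k = j then 1 else 0) - l k * y$j / Lv) * N i j)"
      by (simp only: hG)
    also have "\<dots> = (\<Sum>j\<in>UNIV. (if k = j then 1 else 0) * N i j - l k * (N i j * y$j) / Lv)"
      by (rule sum.cong) (simp_all add: algebra_simps)
    also have "\<dots> = N i k - l k * (\<Sum>j\<in>UNIV. N i j * y$j) / Lv"
      by (simp add: sum_subtractf sum_divide_distrib[symmetric] sum_distrib_left)
    finally show ?thesis using Ny by simp
  qed
  have P4: "(\<Sum>h\<in>UNIV. \<Sum>j\<in>UNIV. G h j * (?h i j * N h k)) = N i k" for i k
  proof -
    have "(\<Sum>h\<in>UNIV. \<Sum>j\<in>UNIV. G h j * (?h i j * N h k)) = (\<Sum>h\<in>UNIV. (\<Sum>j\<in>UNIV. ?h i j * G j h) * N h k)"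
    proof -
      have inner: "(\<Sum>j\<in>UNIV. G hh j * (?h i j * N hh k)) = (\<Sum>j\<in>UNIV. ?h i j * G j hh) * N hh k" for hh
        by (simp add: sum_distrib_right sum_distrib_left G_sym[of hh] mult_ac)
      show ?thesis by (simp only: inner)
    qed
    also have "\<dots> = (\<Sum>h\<in>UNIV. ((if i = h then 1 else 0) - l i * y$h / Lv) * N h k)"
      by (simp only: hG)
    also have "\<dots> = (\<Sum>h\<in>UNIV. (if i = h then 1 else 0) * N h k - l i * (N k h * y$h) / Lv)"
      by (rule sum.cong) (simp_all add: algebra_simps Nsym[of k])
    also have "\<dots> = N i k - l i * (\<Sum>h\<in>UNIV. N k h * y$h) / Lv"
      by (simp add: sum_subtractf sum_divide_distrib[symmetric] sum_distrib_left)
    finally show ?thesis using Ny by simp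
  qed
  have Ric: "Sricg G C i k = (?n - 3) * N i k + \<nu> * ?h i k" for i k
  proof -
    have "Sricg G C i k = (\<Sum>h\<in>UNIV. \<Sum>j\<in>UNIV. G h j * (?h j h * N i k) + G h j * (?h i k * N j h)
        - G h j * (?h h k * N i j) - G h j * (?h i j * N h k))"
      unfolding Sricg_def S wedge_def by (simp add: algebra_simps)
    also have "\<dots> = (\<Sum>h\<in>UNIV. \<Sum>j\<in>UNIV. G h j * (?h j h * N i k)) + (\<Sum>h\<in>UNIV. \<Sum>j\<in>UNIV. G h j * (?h i k * N j h))
        - (\<Sum>h\<in>UNIV. \<Sum>j\<in>UNIV. G h j * (?h h k * N i j)) - (\<Sum>h\<in>UNIV. \<Sum>j\<in>UNIV. G h j * (?h i j * N h k))"
      by (simp add: sum.distrib sum_subtractf)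
    also have "\<dots> = (?n - 3) * N i k + \<nu> * ?h i k"
      unfolding P1 P2 P3 P4 by (simp add: algebra_simps)
    finally show ?thesis .
  qed
  have trh: "(\<Sum>i\<in>UNIV. \<Sum>k\<in>UNIV. G i k * ?h i k) = ?n - 1"
    using tr by (simp add: h_sym)
  have trN: "(\<Sum>i\<in>UNIV. \<Sum>k\<in>UNIV. G i k * N i k) = \<nu>"
    unfolding \<nu>_def by (simp add: Nsym)
  have Sc: "Sscalg G C = (2 * ?n - 4) * \<nu>"
  proof -
    have "Sscalg G C = (\<Sum>i\<in>UNIV. \<Sum>k\<in>UNIV. (?n - 3) * (G i k * N i k) + \<nu> * (G i k * ?h i k))"
      unfolding Sscalg_def Ric by (simp add: algebra_simps)
    also have "\<dots> = (?n - 3) * (\<Sum>i\<in>UNIV. \<Sum>k\<in>UNIV. G i k * N i k) + \<nu> * (\<Sum>i\<in>UNIV. \<Sum>k\<in>UNIV. G i k * ?h i k)"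
      by (simp add: sum.distrib sum_distrib_left)
    also have "\<dots> = (2 * ?n - 4) * \<nu>" unfolding trh trN by (simp add: algebra_simps)
    finally show ?thesis .
  qed
  have n3: "?n - 3 \<noteq> 0" and n2: "?n - 2 \<noteq> 0" using n by auto
  have q: "(2 * ?n - 4) * \<nu> * ?h i j / (2 * (?n - 2)) = \<nu> * ?h i j"
    using n2 by (simp add: field_simps)
  show ?thesis unfolding Mtg_def Ric Sc q using n3 by simp
qed


lemma Sric_sym: "Sricg G (cA l Lv H T) i k = Sricg G (cA l Lv H T) k i"
proof -
  let ?C = "cA l Lv H T"
  have Cf: "?C a b = ?C b a" for a b by (rule ext) (rule C_sym1)
  have A: "(\<Sum>h\<in>UNIV. \<Sum>j\<in>UNIV. G h j * BG G (?C k j) (?C h i)) = (\<Sum>h\<in>UNIV. \<Sum>j\<in>UNIV. G h j * BG G (?C i j) (?C h k))"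
  proof -
    have "(\<Sum>h\<in>UNIV. \<Sum>j\<in>UNIV. G h j * BG G (?C k j) (?C h i)) = (\<Sum>j\<in>UNIV. \<Sum>h\<in>UNIV. G h j * BG G (?C k j) (?C h i))"
      by (rule sum.swap)
    also have "\<dots> = (\<Sum>j\<in>UNIV. \<Sum>h\<in>UNIV. G j h * BG G (?C i h) (?C j k))"
      by (intro sum.cong refl) (metis G_sym BG_sym Cf)
    finally show ?thesis .
  qed
  have "Sricg G ?C i k = (\<Sum>h\<in>UNIV. \<Sum>j\<in>UNIV. G h j * BG G (?C i j) (?C h k)) - (\<Sum>h\<in>UNIV. \<Sum>j\<in>UNIV. G h j * BG G (?C i k) (?C h j))"
    unfolding Sricg_def S3_BG by (simp add: right_diff_distrib sum_subtractf)
  moreover have "Sricg G ?C k i = (\<Sum>h\<in>UNIV. \<Sum>j\<in>UNIV. G h j * BG G (?C k j) (?C h i)) - (\<Sum>h\<in>UNIV. \<Sum>j\<in>UNIV. G h j * BG G (?C k i) (?C h j))"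
    unfolding Sricg_def S3_BG by (simp add: right_diff_distrib sum_subtractf)
  ultimately show ?thesis using A Cf[of i k] by simp
qed

lemma Mt_sym: "Mtg G (cA l Lv H T) (hA l Lv H) i k = Mtg G (cA l Lv H T) (hA l Lv H) k i"
  unfolding Mtg_def using Sric_sym h_sym by metis

lemma Sric_y: "(\<Sum>k\<in>UNIV. Sricg G (cA l Lv H T) i k * y$k) = 0"
proof -
  have "(\<Sum>k\<in>UNIV. Sricg G (cA l Lv H T) i k * y$k)
      = (\<Sum>h\<in>UNIV. \<Sum>j\<in>UNIV. G h j * (\<Sum>k\<in>UNIV. S3g G (cA l Lv H T) h i j k * y$k))"
  proof -
    have "(\<Sum>k\<in>UNIV. Sricg G (cA l Lv H T) i k * y$k)
      = (\<Sum>k\<in>UNIV. \<Sum>h\<in>UNIV. \<Sum>j\<in>UNIV. G h j * (S3g G (cA l Lv H T) h i j k * y$k))"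
      unfolding Sricg_def by (simp only: sum_distrib_right mult.assoc)
    also have "\<dots> = (\<Sum>h\<in>UNIV. \<Sum>k\<in>UNIV. \<Sum>j\<in>UNIV. G h j * (S3g G (cA l Lv H T) h i j k * y$k))"
      by (rule sum.swap)
    also have "\<dots> = (\<Sum>h\<in>UNIV. \<Sum>j\<in>UNIV. \<Sum>k\<in>UNIV. G h j * (S3g G (cA l Lv H T) h i j k * y$k))"
      by (rule sum.cong[OF refl], rule sum.swap)
    also have "\<dots> = (\<Sum>h\<in>UNIV. \<Sum>j\<in>UNIV. G h j * (\<Sum>k\<in>UNIV. S3g G (cA l Lv H T) h i j k * y$k))"
      by (simp only: sum_distrib_left)
    finally show ?thesis .
  qed
  also have "\<dots> = 0" using Sy by simp
  finally show ?thesis .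
qed

lemma Mt_y: "(\<Sum>k\<in>UNIV. Mtg G (cA l Lv H T) (hA l Lv H) i k * y$k) = 0"
proof -
  let ?n = "real CARD('n)"
  have "(\<Sum>k\<in>UNIV. Mtg G (cA l Lv H T) (hA l Lv H) i k * y$k)
     = 1 / (?n - 3) * ((\<Sum>k\<in>UNIV. Sricg G (cA l Lv H T) i k * y$k)
        - Sscalg G (cA l Lv H T) / (2 * (?n - 2)) * (\<Sum>k\<in>UNIV. hA l Lv H i k * y$k))"
    unfolding Mtg_def
    by (simp add: sum_distrib_left sum_distrib_right sum_subtractf algebra_simps sum_divide_distrib)
  also have "\<dots> = 0" using Sric_y hy by simp
  finally show ?thesis .
qed

end

locale fd2 = o: fd y Lv l H T G + s: fd y Lv' l' H' T' G'
  for y Lv l H T G Lv' l' H' T' G' +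
  fixes c :: real and b :: "'n::finite \<Rightarrow> real"
  assumes cpos: "c \<noteq> 0"
    and Lv'_eq: "Lv' = c * Lv + (\<Sum>i\<in>UNIV. b i * y$i)"
    and l'_eq: "\<And>i. l' i = c * l i + b i"
    and H'_eq: "\<And>i j. H' i j = c * H i j"
    and T'_eq: "\<And>i j k. T' i j k = c * T i j k"
begin

definition "bet = (\<Sum>i\<in>UNIV. b i * y$i)"
definition "tau = Lv' / Lv"
definition "mm i = b i - bet / Lv * l i"

lemma tau_nz: "tau \<noteq> 0" unfolding tau_def using o.Lpos s.Lpos by simp
lemma Lv'_tau: "Lv' = tau * Lv" unfolding tau_def using o.Lpos by simp

lemma my: "(\<Sum>i\<in>UNIV. mm i * y$i) = 0"
proof -
  have "(\<Sum>i\<in>UNIV. mm i * y$i) = (\<Sum>i\<in>UNIV. b i * y$i) - bet / Lv * (\<Sum>i\<in>UNIV. l i * y$i)"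
    unfolding mm_def by (simp add: left_diff_distrib sum_subtractf sum_distrib_left mult.assoc)
  then show ?thesis using o.El o.Lpos unfolding bet_def by simp
qed

lemma h'_eq: "hA l' Lv' H' i j = c * tau * hA l Lv H i j"
  unfolding o.hA_eq s.hA_eq H'_eq tau_def using o.Lpos by simp

lemma C'_alg: "(Lv::real) \<noteq> 0 \<Longrightarrow>
 (c*Hri*(c*lj+bj) + (c*li+bi)*(c*Hrj) + (c*lr+br)*(c*Hij) + (c*Lv+\<beta>)*(c*Tt))/2
 = (c*((c*Lv+\<beta>)/Lv)) * ((Hri*lj + li*Hrj + lr*Hij + Lv*Tt)/2)
 + ((c/(2*Lv)*(Lv*Hij))*(br - \<beta>/Lv*lr) + ((c/(2*Lv)*(bj - \<beta>/Lv*lj))*(Lv*Hri) + (c/(2*Lv)*(bi - \<beta>/Lv*li))*(Lv*Hrj)))"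
  by (simp add: field_simps)

lemma C'_eq: "cA l' Lv' H' T' i j = (\<lambda>r. (c*tau) * cA l Lv H T i j r
   + ((c/(2*Lv) * hA l Lv H i j) * mm r + ((c/(2*Lv) * mm j) * hA l Lv H i r + (c/(2*Lv) * mm i) * hA l Lv H j r)))"
proof
  fix r
  have e: "H i r = H r i" "H j r = H r j" using o.Hsym by auto
  have Lb: "Lv' = c * Lv + bet" unfolding bet_def by (rule Lv'_eq)
  show "cA l' Lv' H' T' i j r = (c*tau) * cA l Lv H T i j r
   + ((c/(2*Lv) * hA l Lv H i j) * mm r + ((c/(2*Lv) * mm j) * hA l Lv H i r + (c/(2*Lv) * mm i) * hA l Lv H j r))"
    unfolding tau_def unfolding cA_def o.hA_eq l'_eq H'_eq T'_eq mm_def Lb e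
    by (rule C'_alg[OF o.Lpos])
qed

end


context fd2 begin

lemma B'_eq:
  assumes X: "(\<Sum>r\<in>UNIV. X r * y$r) = 0" and Y: "(\<Sum>r\<in>UNIV. Y r * y$r) = 0"
  shows "BG G' X Y = BG G X Y / (c * tau)"
proof -
  define GY where "GY r = (\<Sum>s\<in>UNIV. G r s * Y s)" for r
  define \<kappa> where "\<kappa> = (\<Sum>r\<in>UNIV. b r * GY r) / Lv'"
  define w where "w r = (GY r - \<kappa> * y$r) / (c * tau)" for r
  have ctau: "c * tau \<noteq> 0" using cpos tau_nz by simp
  have lGY: "(\<Sum>q\<in>UNIV. l q * GY q) = 0"
  proof -
    have "(\<Sum>q\<in>UNIV. l q * GY q) = (\<Sum>s\<in>UNIV. (\<Sum>q\<in>UNIV. l q * G q s) * Y s)"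
      unfolding GY_def by (simp only: sum_distrib_left mult.assoc[symmetric] swap2')
    also have "\<dots> = (\<Sum>s\<in>UNIV. Y s * y$s) / Lv"
      by (simp add: o.lG sum_divide_distrib mult.commute)
    finally show ?thesis using Y by simp
  qed
  have HGY: "(\<Sum>q\<in>UNIV. H i q * GY q) = Y i / Lv" for i
  proof -
    have "(\<Sum>q\<in>UNIV. hA l Lv H i q * GY q) = BG G (hA l Lv H i) Y"
      unfolding BG_alt GY_def ..
    also have "\<dots> = Y i" by (rule o.BG_h_left[OF Y])
    finally have "(\<Sum>q\<in>UNIV. Lv * (H i q * GY q)) = Y i"
      by (simp add: o.hA_eq mult.assoc)
    then have "Lv * (\<Sum>q\<in>UNIV. H i q * GY q) = Y i" by (simp add: sum_distrib_left)
    then show ?thesis using o.Lpos by (simp add: field_simps)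
  qed
  have Hy: "(\<Sum>q\<in>UNIV. H i q * y$q) = 0" for i by (rule o.EH)
  have Hw: "(\<Sum>q\<in>UNIV. H i q * w q) = Y i / Lv / (c * tau)" for i
  proof -
    have "(\<Sum>q\<in>UNIV. H i q * w q) = ((\<Sum>q\<in>UNIV. H i q * GY q) - \<kappa> * (\<Sum>q\<in>UNIV. H i q * y$q)) / (c * tau)"
      unfolding w_def by (simp add: sum_divide_distrib[symmetric] sum_subtractf sum_distrib_left right_diff_distrib mult_ac)
    then show ?thesis using HGY Hy by simp
  qed
  have l'w: "(\<Sum>q\<in>UNIV. l' q * w q) = 0"
  proof -
    have "(\<Sum>q\<in>UNIV. l' q * GY q) = c * (\<Sum>q\<in>UNIV. l q * GY q) + (\<Sum>q\<in>UNIV. b q * GY q)"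
      unfolding l'_eq by (simp add: distrib_right sum.distrib sum_distrib_left mult.assoc)
    then have a: "(\<Sum>q\<in>UNIV. l' q * GY q) = \<kappa> * Lv'"
      using lGY s.Lpos unfolding \<kappa>_def by simp
    have "(\<Sum>q\<in>UNIV. l' q * w q) = ((\<Sum>q\<in>UNIV. l' q * GY q) - \<kappa> * (\<Sum>q\<in>UNIV. l' q * y$q)) / (c * tau)"
      unfolding w_def by (simp add: sum_divide_distrib[symmetric] sum_subtractf sum_distrib_left right_diff_distrib mult_ac)
    then show ?thesis using a s.El by simp
  qed
  have gw: "(\<Sum>q\<in>UNIV. gA l' Lv' H' i q * w q) = Y i" for i
  proof -
    have "(\<Sum>q\<in>UNIV. gA l' Lv' H' i q * w q) = (\<Sum>q\<in>UNIV. l' i * (l' q * w q) + (Lv' * c) * (H i q * w q))"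
      by (intro sum.cong refl) (simp add: gA_def H'_eq algebra_simps)
    also have "\<dots> = l' i * (\<Sum>q\<in>UNIV. l' q * w q) + Lv' * c * (\<Sum>q\<in>UNIV. H i q * w q)"
      by (simp only: sum.distrib sum_distrib_left[symmetric])
    also have "\<dots> = Y i" using l'w Hw ctau o.Lpos unfolding tau_def by (simp add: field_simps)
    finally show ?thesis .
  qed
  have Gw: "(\<Sum>s\<in>UNIV. G' r s * Y s) = w r" for r
  proof -
    have "(\<Sum>s\<in>UNIV. G' r s * Y s) = (\<Sum>s\<in>UNIV. G' r s * (\<Sum>q\<in>UNIV. gA l' Lv' H' s q * w q))"
      using gw by simp
    also have "\<dots> = (\<Sum>q\<in>UNIV. (\<Sum>s\<in>UNIV. G' r s * gA l' Lv' H' s q) * w q)"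
      by (simp only: sum_distrib_left mult.assoc[symmetric] swap2')
    also have "\<dots> = w r" by (simp add: s.GL)
    finally show ?thesis .
  qed
  have "BG G' X Y = (\<Sum>r\<in>UNIV. X r * w r)" unfolding BG_alt Gw ..
  also have "\<dots> = ((\<Sum>r\<in>UNIV. X r * GY r) - \<kappa> * (\<Sum>r\<in>UNIV. X r * y$r)) / (c * tau)"
    unfolding w_def by (simp add: sum_divide_distrib[symmetric] sum_subtractf sum_distrib_left right_diff_distrib mult_ac)
  also have "\<dots> = BG G X Y / (c * tau)" using X unfolding BG_alt GY_def by simp
  finally show ?thesis .
qed

lemma Bhh: "BG G (hA l Lv H a) (hA l Lv H d) = hA l Lv H d a"
  by (rule o.BG_h_left[OF o.hy])
lemma Bhm: "BG G (hA l Lv H a) mm = mm a"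
  by (rule o.BG_h_left[OF my])
lemma Bmh: "BG G mm (hA l Lv H a) = mm a"
  by (rule o.BG_h_right[OF my])
lemma BhC: "BG G (hA l Lv H a) (cA l Lv H T d e) = cA l Lv H T d e a"
  by (rule o.BG_h_left[OF o.Cy])
lemma BCh: "BG G (cA l Lv H T d e) (hA l Lv H a) = cA l Lv H T d e a"
  by (rule o.BG_h_right[OF o.Cy])
lemma BmC: "BG G mm (cA l Lv H T d e) = BG G (cA l Lv H T d e) mm"
  by (rule o.BG_sym)

lemma Cfun_sym: "cA l Lv H T a d = cA l Lv H T d a"
  by (rule ext) (rule o.C_sym1)

lemma BCy: "(\<Sum>d\<in>UNIV. BG G (cA l Lv H T a d) X * y$d) = 0"
proof -
  have "(\<Sum>d\<in>UNIV. BG G (cA l Lv H T a d) X * y$d)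
     = (\<Sum>d\<in>UNIV. (\<Sum>r\<in>UNIV. cA l Lv H T a d r * (\<Sum>s\<in>UNIV. G r s * X s)) * y$d)"
    unfolding BG_alt ..
  also have "\<dots> = (\<Sum>r\<in>UNIV. (\<Sum>d\<in>UNIV. cA l Lv H T a d r * y$d) * (\<Sum>s\<in>UNIV. G r s * X s))"
    by (rule swap2)
  also have "\<dots> = 0"
  proof -
    have "(\<Sum>d\<in>UNIV. cA l Lv H T a d r * y$d) = 0" for r
      using o.Cy[of a r] o.C_sym2 by simp
    then show ?thesis by simp
  qed
  finally show ?thesis .
qed

lemma transfer:
  assumes n: "real CARD('n) > 4" and S4: "S4g G (cA l Lv H T) (hA l Lv H)"
  shows "S4g G' (cA l' Lv' H' T') (hA l' Lv' H')"
proof -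
  define M where "M = Mtg G (cA l Lv H T) (hA l Lv H)"
  define N' where "N' a d = M a d - BG G (cA l Lv H T a d) mm / (2*tau*Lv)
     - (mm a * mm d + BG G mm mm * hA l Lv H a d / 2) / (4*tau^2*Lv^2)" for a d
  have Sw: "BG G (cA l Lv H T i j) (cA l Lv H T h k) = BG G (cA l Lv H T i k) (cA l Lv H T h j) + wedge (hA l Lv H) M h i j k" for h i j k
  proof -
    have "S3g G (cA l Lv H T) h i j k = wedge (hA l Lv H) M h i j k" using S4 unfolding S4g_def M_def by blast
    then show ?thesis unfolding o.S3_BG by simp
  qed
  have ctau: "c * tau \<noteq> 0" using cpos tau_nz by simp
  have key: "S3g G' (cA l' Lv' H' T') h i j k = wedge (hA l' Lv' H') N' h i j k" for h i j k
  proof -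
    have "S3g G' (cA l' Lv' H' T') h i j k = (BG G (cA l' Lv' H' T' i j) (cA l' Lv' H' T' h k) - BG G (cA l' Lv' H' T' i k) (cA l' Lv' H' T' h j)) / (c * tau)"
      unfolding s.S3_BG using B'_eq[OF s.Cy s.Cy] by (simp add: diff_divide_distrib)
    also have "\<dots> = wedge (hA l' Lv' H') N' h i j k"
    proof -
      have Sw1: "BG G (cA l Lv H T i j) (cA l Lv H T h k) = BG G (cA l Lv H T i k) (cA l Lv H T h j) + wedge (hA l Lv H) M h i j k"
        by (rule Sw)
      have hs: "hA l Lv H h j = hA l Lv H j h" "hA l Lv H k i = hA l Lv H i k" "hA l Lv H k h = hA l Lv H h k"
        "hA l Lv H j i = hA l Lv H i j" "hA l Lv H i h = hA l Lv H h i" "hA l Lv H k j = hA l Lv H j k"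
        by (simp_all add: o.h_sym)
      have cs: "cA l Lv H T h j i = cA l Lv H T i j h" "cA l Lv H T i k h = cA l Lv H T h k i"
        "cA l Lv H T i k j = cA l Lv H T i j k" "cA l Lv H T h j k = cA l Lv H T h k j"
        by (metis o.C_sym1 o.C_sym2)+
      have bs: "BG G (cA l Lv H T j h) mm = BG G (cA l Lv H T h j) mm" using Cfun_sym by metis
      show ?thesis
        unfolding C'_eq
        apply (simp only: BG_add_left BG_add_right BG_scale_left BG_scale_right Bhh Bhm Bmh BhC BCh BmC)
        apply (simp only: Sw1 hs cs)
        unfolding wedge_def N'_def h'_eq bs
        using ctau o.Lpos tau_nz cpos
        apply (simp add: field_simps)
        apply algebra
        done
    qed
    finally show ?thesis .
  qed
  have N'sym: "N' a d = N' d a" for a d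
    unfolding N'_def M_def using o.Mt_sym[of a d] o.h_sym[of a d] Cfun_sym[of a d] by (simp add: mult.commute)
  have N'y: "(\<Sum>d\<in>UNIV. N' a d * y$d) = 0" for a
  proof -
    have "(\<Sum>d\<in>UNIV. N' a d * y$d) = (\<Sum>d\<in>UNIV. M a d * y$d - 1/(2*tau*Lv) * (BG G (cA l Lv H T a d) mm * y$d)
       - mm a / (4*tau^2*Lv^2) * (mm d * y$d) - BG G mm mm / (8*tau^2*Lv^2) * (hA l Lv H a d * y$d))"
      unfolding N'_def using o.Lpos tau_nz by (intro sum.cong refl) (simp add: field_simps)
    also have "\<dots> = (\<Sum>d\<in>UNIV. M a d * y$d) - 1/(2*tau*Lv) * (\<Sum>d\<in>UNIV. BG G (cA l Lv H T a d) mm * y$d)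
       - mm a / (4*tau^2*Lv^2) * (\<Sum>d\<in>UNIV. mm d * y$d) - BG G mm mm / (8*tau^2*Lv^2) * (\<Sum>d\<in>UNIV. hA l Lv H a d * y$d)"
      by (simp only: sum_subtractf sum_distrib_left)
    also have "\<dots> = 0" unfolding M_def using o.Mt_y BCy my o.hy by simp
    finally show ?thesis .
  qed
  have n': "real CARD('n) > 3" using n by simp
  have Mt': "Mtg G' (cA l' Lv' H' T') (hA l' Lv' H') = N'"
    using s.trace[OF n' key N'sym N'y] by (intro ext) blast
  show ?thesis unfolding S4g_def Mt' using key by blast
qed

end


lemma pd_hasderiv:
  fixes f :: "real^'n::finite \<Rightarrow> real"
  assumes "(f has_derivative f') (at y)"
  shows "pd i f y = f' (axis i 1)"
proof -
  let ?e = "axis i 1 :: real^'n"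
  have lin: "linear f'" using assms has_derivative_linear by blast
  have 1: "((\<lambda>t::real. y + t *\<^sub>R ?e) has_derivative (\<lambda>t. t *\<^sub>R ?e)) (at 0)"
    by (auto intro!: derivative_eq_intros)
  have 2: "(f has_derivative f') (at ((\<lambda>t::real. y + t *\<^sub>R ?e) 0))" using assms by simp
  have "((f \<circ> (\<lambda>t. y + t *\<^sub>R ?e)) has_derivative (f' \<circ> (\<lambda>t. t *\<^sub>R ?e))) (at 0)"
    by (rule diff_chain_at[OF 1 2])
  moreover have "f' \<circ> (\<lambda>t. t *\<^sub>R ?e) = (*) (f' ?e)"
    by (rule ext) (simp add: linear_cmul[OF lin])
  ultimately have "((\<lambda>t. f (y + t *\<^sub>R ?e)) has_field_derivative f' ?e) (at 0)"
    unfolding has_field_derivative_def by (simp add: o_def)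
  then show ?thesis unfolding pd_def pdir_def by (rule DERIV_imp_deriv)
qed

lemma pd_local:
  fixes f g :: "real^'n::finite \<Rightarrow> real"
  assumes "open S" "y \<in> S" "\<And>z. z \<in> S \<Longrightarrow> f z = g z"
  shows "pd i f y = pd i g y"
proof -
  let ?p = "\<lambda>t::real. y + t *\<^sub>R axis i 1"
  have "open (?p -` S)" by (rule continuous_open_vimage[OF assms(1)]) (intro continuous_intros)
  moreover have "0 \<in> ?p -` S" using assms(2) by simp
  ultimately have "eventually (\<lambda>t. ?p t \<in> S) (nhds 0)"
    unfolding eventually_nhds by blast
  then have "eventually (\<lambda>t. f (?p t) = g (?p t)) (nhds 0)"
    by (rule eventually_mono) (simp add: assms(3))
  then show ?thesis unfolding pd_def pdir_def by (rule deriv_cong_ev) simp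
qed

lemma pd_frechet:
  fixes f :: "real^'n::finite \<Rightarrow> real"
  assumes "f differentiable (at y)"
  shows "pd i f y = frechet_derivative f (at y) (axis i 1)"
  using assms frechet_derivative_works pd_hasderiv by blast

lemma pd_mult:
  fixes f g :: "real^'n::finite \<Rightarrow> real"
  assumes "f differentiable (at y)" "g differentiable (at y)"
  shows "pd i (\<lambda>z. f z * g z) y = pd i f y * g y + f y * pd i g y"
proof -
  obtain F' where F: "(f has_derivative F') (at y)" using assms(1) differentiable_def by blast
  obtain G' where G: "(g has_derivative G') (at y)" using assms(2) differentiable_def by blast
  have "((\<lambda>z. f z * g z) has_derivative (\<lambda>h. f y * G' h + F' h * g y)) (at y)"
    using has_derivative_mult[OF F G] by simp
  then have "pd i (\<lambda>z. f z * g z) y = f y * G' (axis i 1) + F' (axis i 1) * g y" by (rule pd_hasderiv)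
  then show ?thesis using pd_hasderiv[OF F] pd_hasderiv[OF G] by simp
qed

lemma pd_add:
  fixes f g :: "real^'n::finite \<Rightarrow> real"
  assumes "f differentiable (at y)" "g differentiable (at y)"
  shows "pd i (\<lambda>z. f z + g z) y = pd i f y + pd i g y"
proof -
  obtain F' where F: "(f has_derivative F') (at y)" using assms(1) differentiable_def by blast
  obtain G' where G: "(g has_derivative G') (at y)" using assms(2) differentiable_def by blast
  have "((\<lambda>z. f z + g z) has_derivative (\<lambda>h. F' h + G' h)) (at y)"
    using has_derivative_add[OF F G] by simp
  then have "pd i (\<lambda>z. f z + g z) y = F' (axis i 1) + G' (axis i 1)" by (rule pd_hasderiv)
  then show ?thesis using pd_hasderiv[OF F] pd_hasderiv[OF G] by simp
qed

lemma pd_cmult: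
  fixes f :: "real^'n::finite \<Rightarrow> real"
  assumes "f differentiable (at y)"
  shows "pd i (\<lambda>z. c * f z) y = c * pd i f y"
proof -
  obtain F' where F: "(f has_derivative F') (at y)" using assms(1) differentiable_def by blast
  have "((\<lambda>z. c * f z) has_derivative (\<lambda>h. c * F' h)) (at y)"
    by (auto intro!: derivative_eq_intros F)
  then have "pd i (\<lambda>z. c * f z) y = c * F' (axis i 1)" by (rule pd_hasderiv)
  then show ?thesis using pd_hasderiv[OF F] by simp
qed

lemma pd_const: "pd i (\<lambda>z::real^'n::finite. k) y = 0"
proof -
  have "((\<lambda>z::real^'n. k) has_derivative (\<lambda>h. 0)) (at y)" by (auto intro!: derivative_eq_intros)
  from pd_hasderiv[OF this] show ?thesis by simp
qed

lemma pd_lin: "pd i (\<lambda>z::real^'n::finite. \<Sum>j\<in>UNIV. b j * z$j) y = b i"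
proof -
  have "((\<lambda>z::real^'n. \<Sum>j\<in>UNIV. b j * z$j) has_derivative (\<lambda>h. \<Sum>j\<in>UNIV. b j * h$j)) (at y)"
    by (auto intro!: derivative_eq_intros bounded_linear_imp_has_derivative[OF bounded_linear_vec_nth])
  then have "pd i (\<lambda>z::real^'n::finite. \<Sum>j\<in>UNIV. b j * z$j) y = (\<Sum>j\<in>UNIV. b j * axis i 1 $ j)"
    by (rule pd_hasderiv)
  also have "\<dots> = b i" by (simp add: axis_def if_distrib cong: if_cong)
  finally show ?thesis .
qed

lemma pd_pow2:
  fixes f :: "real^'n::finite \<Rightarrow> real"
  assumes "f differentiable (at y)"
  shows "pd i (\<lambda>z. (f z)^2) y = 2 * f y * pd i f y"
  using pd_mult[OF assms assms, of i] by (simp add: power2_eq_square)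

lemma dir_deriv:
  fixes f :: "real^'n::finite \<Rightarrow> real"
  assumes "f differentiable (at (q + t *\<^sub>R axis i 1))"
  shows "((\<lambda>t. f (q + t *\<^sub>R axis i 1)) has_real_derivative pd i f (q + t *\<^sub>R axis i 1)) (at t)"
proof -
  let ?e = "axis i 1 :: real^'n"
  obtain F' where F: "(f has_derivative F') (at (q + t *\<^sub>R ?e))" using assms differentiable_def by blast
  have lin: "linear F'" using F has_derivative_linear by blast
  have 1: "((\<lambda>t::real. q + t *\<^sub>R ?e) has_derivative (\<lambda>h. h *\<^sub>R ?e)) (at t)"
    by (auto intro!: derivative_eq_intros)
  have "((f \<circ> (\<lambda>t. q + t *\<^sub>R ?e)) has_derivative (F' \<circ> (\<lambda>h. h *\<^sub>R ?e))) (at t)"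
    by (rule diff_chain_at[OF 1]) (use F in simp)
  moreover have "F' \<circ> (\<lambda>h. h *\<^sub>R ?e) = (*) (F' ?e)"
    by (rule ext) (simp add: linear_cmul[OF lin])
  ultimately have "((\<lambda>t. f (q + t *\<^sub>R ?e)) has_field_derivative F' ?e) (at t)"
    unfolding has_field_derivative_def by (simp add: o_def)
  then show ?thesis using pd_hasderiv[OF F] by simp
qed

lemma pd_scale_arg:
  fixes G :: "real^'n::finite \<Rightarrow> real"
  assumes "G differentiable (at (t *\<^sub>R z))"
  shows "pd i (\<lambda>w. G (t *\<^sub>R w)) z = t * pd i G (t *\<^sub>R z)"
proof -
  obtain G' where F: "(G has_derivative G') (at (t *\<^sub>R z))" using assms differentiable_def by blast
  have lin: "linear G'" using F has_derivative_linear by blast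
  have 1: "((\<lambda>w::real^'n. t *\<^sub>R w) has_derivative (\<lambda>h. t *\<^sub>R h)) (at z)"
    by (auto intro!: derivative_eq_intros)
  have "((G \<circ> (\<lambda>w. t *\<^sub>R w)) has_derivative (G' \<circ> (\<lambda>h. t *\<^sub>R h))) (at z)"
    by (rule diff_chain_at[OF 1]) (use F in simp)
  then have "pd i (\<lambda>w. G (t *\<^sub>R w)) z = G' (t *\<^sub>R axis i 1)"
    using pd_hasderiv by (simp add: o_def)
  also have "\<dots> = t * G' (axis i 1)" by (simp add: linear_cmul[OF lin])
  finally show ?thesis using pd_hasderiv[OF F] by simp
qed

lemma euler_gen:
  fixes G :: "real^'n::finite \<Rightarrow> real"
  assumes dG: "G differentiable (at y)"
    and hom: "\<And>t. t > 0 \<Longrightarrow> G (t *\<^sub>R y) = k t"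
    and dk: "(k has_real_derivative d) (at 1)"
  shows "(\<Sum>j\<in>UNIV. pd j G y * y$j) = d"
proof -
  obtain G' where F: "(G has_derivative G') (at y)" using dG differentiable_def by blast
  have lin: "linear G'" using F has_derivative_linear by blast
  have 1: "((\<lambda>t::real. t *\<^sub>R y) has_derivative (\<lambda>h. h *\<^sub>R y)) (at 1)"
    by (auto intro!: derivative_eq_intros)
  have "((G \<circ> (\<lambda>t. t *\<^sub>R y)) has_derivative (G' \<circ> (\<lambda>h. h *\<^sub>R y))) (at 1)"
    by (rule diff_chain_at[OF 1]) (use F in simp)
  moreover have "G' \<circ> (\<lambda>h. h *\<^sub>R y) = (*) (G' y)"
    by (rule ext) (simp add: linear_cmul[OF lin])
  ultimately have a: "((\<lambda>t. G (t *\<^sub>R y)) has_field_derivative G' y) (at 1)"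
    unfolding has_field_derivative_def by (simp add: o_def)
  have "(k has_field_derivative G' y) (at 1)"
    by (rule has_field_derivative_transform_within_open[OF a, of "{0<..}"]) (auto simp: hom)
  then have eq: "G' y = d" using dk DERIV_unique by blast
  have "y = (\<Sum>j\<in>UNIV. y$j *\<^sub>R axis j 1)"
    using basis_expansion[of y] by (simp add: scalar_mult_eq_scaleR)
  then have "G' y = G' (\<Sum>j\<in>UNIV. y$j *\<^sub>R axis j 1)" by simp
  also have "\<dots> = (\<Sum>j\<in>UNIV. G' (y$j *\<^sub>R axis j 1))" by (rule linear_sum[OF lin])
  also have "\<dots> = (\<Sum>j\<in>UNIV. y$j * G' (axis j 1))" by (simp add: linear_cmul[OF lin])
  finally have "G' y = (\<Sum>j\<in>UNIV. y$j * G' (axis j 1))" .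
  also have "\<dots> = (\<Sum>j\<in>UNIV. pd j G y * y$j)" using pd_hasderiv[OF F] by (simp add: mult.commute)
  finally show ?thesis using eq by simp
qed


lemma clairaut_aux:
  fixes f :: "real^'n::finite \<Rightarrow> real"
  assumes S: "open S" "p \<in> S"
    and df: "\<And>z. z \<in> S \<Longrightarrow> f differentiable (at z)"
    and dfi: "\<And>z. z \<in> S \<Longrightarrow> pd i f differentiable (at z)"
    and ci: "isCont (pd j (pd i f)) p"
    and e: "e > 0"
  shows "\<exists>d>0. \<forall>s. 0 < s \<and> s < d \<longrightarrow>
    \<bar>(f (p + s *\<^sub>R axis j 1 + s *\<^sub>R axis i 1) - f (p + s *\<^sub>R axis i 1) - f (p + s *\<^sub>R axis j 1) + f p) / s^2
       - pd j (pd i f) p\<bar> \<le> e"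
proof -
  let ?u = "axis i 1 :: real^'n" and ?v = "axis j 1 :: real^'n"
  let ?A = "pd j (pd i f)"
  obtain d1 where d1: "d1 > 0" "\<And>z. dist z p < d1 \<Longrightarrow> \<bar>?A z - ?A p\<bar> < e"
    using ci e unfolding continuous_at_eps_delta dist_real_def by blast
  obtain d2 where d2: "d2 > 0" "ball p d2 \<subseteq> S" using S open_contains_ball by blast
  define d where "d = min d1 d2 / 2"
  have dpos: "d > 0" using d1 d2 by (simp add: d_def)
  show ?thesis
  proof (intro exI[of _ d] conjI allI impI dpos)
    fix s assume s: "0 < s \<and> s < d"
    have near: "dist (p + a *\<^sub>R ?u + b *\<^sub>R ?v) p < min d1 d2"
      if "0 \<le> a" "a \<le> s" "0 \<le> b" "b \<le> s" for a b
    proof -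
      have "norm (a *\<^sub>R ?u + b *\<^sub>R ?v) \<le> norm (a *\<^sub>R ?u) + norm (b *\<^sub>R ?v)" by (rule norm_triangle_ineq)
      also have "\<dots> = a + b" using that by simp
      also have "\<dots> < min d1 d2" using that s unfolding d_def by linarith
      finally show ?thesis by (simp add: dist_norm add.assoc)
    qed
    have inS: "p + a *\<^sub>R ?u + b *\<^sub>R ?v \<in> S" if "0 \<le> a" "a \<le> s" "0 \<le> b" "b \<le> s" for a b
      using near[OF that] d2 by (auto simp: dist_commute)
    define \<phi> where "\<phi> t = f ((p + s *\<^sub>R ?v) + t *\<^sub>R ?u) - f (p + t *\<^sub>R ?u)" for t
    have \<phi>d: "DERIV \<phi> t :> pd i f ((p + s *\<^sub>R ?v) + t *\<^sub>R ?u) - pd i f (p + t *\<^sub>R ?u)"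
      if "0 \<le> t" "t \<le> s" for t
    proof -
      have a: "(p + s *\<^sub>R ?v) + t *\<^sub>R ?u \<in> S" using inS[of t s] that s by (simp add: add_ac)
      have b: "p + t *\<^sub>R ?u \<in> S" using inS[of t 0] that s by simp
      show ?thesis unfolding \<phi>_def
        by (intro DERIV_diff dir_deriv df a b)
    qed
    obtain \<xi> where \<xi>: "0 < \<xi>" "\<xi> < s"
      "\<phi> s - \<phi> 0 = (s - 0) * (pd i f ((p + s *\<^sub>R ?v) + \<xi> *\<^sub>R ?u) - pd i f (p + \<xi> *\<^sub>R ?u))"
      using MVT2[of 0 s \<phi> "\<lambda>t. pd i f ((p + s *\<^sub>R ?v) + t *\<^sub>R ?u) - pd i f (p + t *\<^sub>R ?u)"] \<phi>d s by auto
    define \<psi> where "\<psi> r = pd i f ((p + \<xi> *\<^sub>R ?u) + r *\<^sub>R ?v)" for r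
    have \<psi>d: "DERIV \<psi> r :> ?A ((p + \<xi> *\<^sub>R ?u) + r *\<^sub>R ?v)" if "0 \<le> r" "r \<le> s" for r
    proof -
      have a: "(p + \<xi> *\<^sub>R ?u) + r *\<^sub>R ?v \<in> S" using inS[of \<xi> r] that \<xi> by simp
      show ?thesis unfolding \<psi>_def by (intro dir_deriv dfi a)
    qed
    obtain \<eta> where \<eta>: "0 < \<eta>" "\<eta> < s" "\<psi> s - \<psi> 0 = (s - 0) * ?A ((p + \<xi> *\<^sub>R ?u) + \<eta> *\<^sub>R ?v)"
      using MVT2[of 0 s \<psi> "\<lambda>r. ?A ((p + \<xi> *\<^sub>R ?u) + r *\<^sub>R ?v)"] \<psi>d s by auto
    have e1: "\<phi> s - \<phi> 0 = f (p + s *\<^sub>R ?v + s *\<^sub>R ?u) - f (p + s *\<^sub>R ?u) - f (p + s *\<^sub>R ?v) + f p"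
      unfolding \<phi>_def by simp
    have e2: "\<psi> s - \<psi> 0 = pd i f ((p + s *\<^sub>R ?v) + \<xi> *\<^sub>R ?u) - pd i f (p + \<xi> *\<^sub>R ?u)"
      unfolding \<psi>_def by (simp add: add_ac)
    have eqD: "f (p + s *\<^sub>R ?v + s *\<^sub>R ?u) - f (p + s *\<^sub>R ?u) - f (p + s *\<^sub>R ?v) + f p
        = s^2 * ?A ((p + \<xi> *\<^sub>R ?u) + \<eta> *\<^sub>R ?v)"
      using \<xi>(3) \<eta>(3) e1 e2 by (simp add: power2_eq_square)
    have "dist ((p + \<xi> *\<^sub>R ?u) + \<eta> *\<^sub>R ?v) p < d1" using near[of \<xi> \<eta>] \<xi> \<eta> by simp
    then have "\<bar>?A ((p + \<xi> *\<^sub>R ?u) + \<eta> *\<^sub>R ?v) - ?A p\<bar> < e" by (rule d1(2))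
    then show "\<bar>(f (p + s *\<^sub>R ?v + s *\<^sub>R ?u) - f (p + s *\<^sub>R ?u) - f (p + s *\<^sub>R ?v) + f p) / s^2 - ?A p\<bar> \<le> e"
      using eqD s by simp
  qed
qed

lemma clairaut:
  fixes f :: "real^'n::finite \<Rightarrow> real"
  assumes S: "open S" "p \<in> S"
    and df: "\<And>z. z \<in> S \<Longrightarrow> f differentiable (at z)"
    and dfi: "\<And>z. z \<in> S \<Longrightarrow> pd i f differentiable (at z)"
    and dfj: "\<And>z. z \<in> S \<Longrightarrow> pd j f differentiable (at z)"
    and ci: "isCont (pd j (pd i f)) p"
    and cj: "isCont (pd i (pd j f)) p"
  shows "pd j (pd i f) p = pd i (pd j f) p"
proof (rule ccontr)
  let ?A = "pd j (pd i f) p" and ?B = "pd i (pd j f) p"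
  let ?u = "axis i 1 :: real^'n" and ?v = "axis j 1 :: real^'n"
  assume ne: "?A \<noteq> ?B"
  define e where "e = \<bar>?A - ?B\<bar> / 3"
  have e: "e > 0" using ne by (simp add: e_def)
  obtain d where d: "d > 0" "\<And>s. 0 < s \<and> s < d \<Longrightarrow>
    \<bar>(f (p + s *\<^sub>R ?v + s *\<^sub>R ?u) - f (p + s *\<^sub>R ?u) - f (p + s *\<^sub>R ?v) + f p) / s^2 - ?A\<bar> \<le> e"
    using clairaut_aux[OF S df dfi ci e] by blast
  obtain d' where d': "d' > 0" "\<And>s. 0 < s \<and> s < d' \<Longrightarrow>
    \<bar>(f (p + s *\<^sub>R ?u + s *\<^sub>R ?v) - f (p + s *\<^sub>R ?v) - f (p + s *\<^sub>R ?u) + f p) / s^2 - ?B\<bar> \<le> e"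
    using clairaut_aux[OF S df dfj cj e] by blast
  define s where "s = min d d' / 2"
  have s: "0 < s \<and> s < d" "0 < s \<and> s < d'" using d d' by (auto simp: s_def)
  have same: "p + s *\<^sub>R ?u + s *\<^sub>R ?v = p + s *\<^sub>R ?v + s *\<^sub>R ?u" by (simp add: add_ac)
  let ?P = "f (p + s *\<^sub>R ?v + s *\<^sub>R ?u)"
  have eqq: "(?P - f (p + s *\<^sub>R ?u) - f (p + s *\<^sub>R ?v) + f p) / s^2 = (?P - f (p + s *\<^sub>R ?v) - f (p + s *\<^sub>R ?u) + f p) / s^2"
    by (simp add: algebra_simps)
  have "\<bar>?A - ?B\<bar> \<le> 2 * e" using d(2)[OF s(1)] d'(2)[OF s(2)] eqq unfolding same by linarith
  moreover have "\<And>x::real. x \<le> 2 * (x / 3) \<Longrightarrow> 0 < x / 3 \<Longrightarrow> False" by linarith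
  ultimately show False using e unfolding e_def by blast
qed



definition smF :: "(real^'n::finite \<Rightarrow> real) \<Rightarrow> bool" where
  "smF F \<longleftrightarrow> (\<forall>vs. set vs \<subseteq> Basis \<longrightarrow> (\<forall>p. p \<noteq> 0 \<longrightarrow> iter_pdir vs F differentiable (at p)))"

lemma iter_pdir_prod:
  "iter_pdir (map (\<lambda>v. (0::real^'m::finite, v)) vs) f (x', z) = iter_pdir vs (\<lambda>z. f (x', z)) (z::real^'n::finite)"
proof (induction vs arbitrary: x' z)
  case Nil
  then show ?case by simp
next
  case (Cons v vs)
  have eq: "(x', z) + t *\<^sub>R (0::real^'m, v) = (x', z + t *\<^sub>R v)" for t by simp
  show ?case by (simp add: pdir_def eq Cons.IH)
qed

lemma finsler_sm:
  fixes L :: "real^'n::finite \<Rightarrow> real^'n \<Rightarrow> real"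
  assumes fm: "finsler_metric U L" and x: "x \<in> U"
  shows "smF (L x)"
  unfolding smF_def
proof (intro allI impI)
  fix vs :: "(real^'n) list" and p :: "real^'n"
  assume vs: "set vs \<subseteq> Basis" and p: "p \<noteq> 0"
  let ?ws = "map (\<lambda>v. (0::real^'n, v)) vs"
  have ws: "set ?ws \<subseteq> Basis" using vs by (auto simp: Basis_prod_def)
  have sm: "smooth_on (U \<times> (UNIV - {0})) (\<lambda>(x, y). L x y)" using fm unfolding finsler_metric_def by blast
  have "iter_pdir ?ws (\<lambda>(x, y). L x y) differentiable (at (x, p))"
    using sm ws x p unfolding smooth_on_def by blast
  moreover have "(\<lambda>z. (x, z)) differentiable (at p)"
    by (auto intro!: derivative_intros)
  ultimately have "(iter_pdir ?ws (\<lambda>(x, y). L x y) \<circ> (\<lambda>z. (x, z))) differentiable (at p)"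
    using differentiable_chain_at by (metis (no_types, lifting))
  moreover have "iter_pdir ?ws (\<lambda>(x, y). L x y) \<circ> (\<lambda>z. (x, z)) = iter_pdir vs (L x)"
    by (rule ext) (simp add: iter_pdir_prod)
  ultimately show "iter_pdir vs (L x) differentiable (at p)" by simp
qed

lemma pd_pdir: "pd i f = pdir (axis i 1) f"
  by (rule ext) (simp add: pd_def)

lemma sm_diff:
  fixes F :: "real^'n::finite \<Rightarrow> real"
  assumes "smF F" "p \<noteq> 0"
  shows "F differentiable (at p)" "pd i F differentiable (at p)"
    "pd i (pd j F) differentiable (at p)" "pd i (pd j (pd k F)) differentiable (at p)"
proof -
  have B: "axis a (1::real) \<in> Basis" for a :: 'n by simp
  show "F differentiable (at p)" using assms unfolding smF_def
    by (metis empty_subsetI empty_set iter_pdir.simps(1))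
  show "pd i F differentiable (at p)" using assms B unfolding smF_def pd_pdir
    by (metis (no_types, lifting) empty_set empty_subsetI insert_subset iter_pdir.simps list.simps(15))
  show "pd i (pd j F) differentiable (at p)" using assms B unfolding smF_def pd_pdir
    by (metis (no_types, lifting) empty_set empty_subsetI insert_subset iter_pdir.simps list.simps(15))
  show "pd i (pd j (pd k F)) differentiable (at p)" using assms B unfolding smF_def pd_pdir
    by (metis (no_types, lifting) empty_set empty_subsetI insert_subset iter_pdir.simps list.simps(15))
qed


lemma openS: "open (UNIV - {0::real^'n::finite})"
  by (intro open_Diff) auto

lemma diff_cont: "f differentiable (at p) \<Longrightarrow> isCont f p"
  using differentiable_imp_continuous_within[of f p UNIV] by simp

definition dl :: "(real^'n::finite \<Rightarrow> real^'n \<Rightarrow> real) \<Rightarrow> real^'n \<Rightarrow> real^'n \<Rightarrow> 'n \<Rightarrow> real" where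
  "dl L x y i = pd i (L x) y"
definition dH :: "(real^'n::finite \<Rightarrow> real^'n \<Rightarrow> real) \<Rightarrow> real^'n \<Rightarrow> real^'n \<Rightarrow> 'n \<Rightarrow> 'n \<Rightarrow> real" where
  "dH L x y a b = pd a (pd b (L x)) y"
definition dT :: "(real^'n::finite \<Rightarrow> real^'n \<Rightarrow> real) \<Rightarrow> real^'n \<Rightarrow> real^'n \<Rightarrow> 'n \<Rightarrow> 'n \<Rightarrow> 'n \<Rightarrow> real" where
  "dT L x y a b d = pd a (pd b (pd d (L x))) y"

lemma gt_eq:
  fixes L :: "real^'n::finite \<Rightarrow> real^'n \<Rightarrow> real"
  assumes sm: "smF (L x)" and y: "y \<noteq> 0"
  shows "gt L x y i j = gA (dl L x y) (L x y) (dH L x y) i j"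
proof -
  let ?F = "L x" and ?S = "UNIV - {0::real^'n}"
  have e1: "pd j (\<lambda>z. (?F z)^2) z = (2 * ?F z) * pd j ?F z" if "z \<in> ?S" for z
    using pd_pow2[OF sm_diff(1)[OF sm]] that by auto
  have "pd i (pd j (\<lambda>z. (?F z)^2)) y = pd i (\<lambda>z. (2 * ?F z) * pd j ?F z) y"
    by (rule pd_local[OF openS]) (use e1 y in auto)
  also have "\<dots> = pd i (\<lambda>z. 2 * ?F z) y * pd j ?F y + (2 * ?F y) * pd i (pd j ?F) y"
    by (rule pd_mult) (use sm_diff[OF sm y] in auto)
  also have "pd i (\<lambda>z. 2 * ?F z) y = 2 * pd i ?F y"
    by (rule pd_cmult) (use sm_diff[OF sm y] in auto)
  finally show ?thesis unfolding gt_def gA_def dl_def dH_def by simp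
qed

lemma ht_eq:
  fixes L :: "real^'n::finite \<Rightarrow> real^'n \<Rightarrow> real"
  assumes sm: "smF (L x)" and y: "y \<noteq> 0"
  shows "ht L x y = hA (dl L x y) (L x y) (dH L x y)"
  by (intro ext) (simp add: ht_def hA_def gt_eq[of L x y, OF sm y] lt_def dl_def)

lemma ct_eq:
  fixes L :: "real^'n::finite \<Rightarrow> real^'n \<Rightarrow> real"
  assumes sm: "smF (L x)" and y: "y \<noteq> 0"
  shows "ct L x y i j k = cA (dl L x y) (L x y) (dH L x y) (dT L x y) i j k"
proof -
  let ?F = "L x" and ?S = "UNIV - {0::real^'n}"
  have e1: "gt L x z i j = pd i ?F z * pd j ?F z + ?F z * pd i (pd j ?F) z" if "z \<in> ?S" for z
    using gt_eq[of L x z i j, OF sm] that by (simp add: gA_def dl_def dH_def)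
  have "pd k (\<lambda>z. gt L x z i j) y = pd k (\<lambda>z. pd i ?F z * pd j ?F z + ?F z * pd i (pd j ?F) z) y"
    by (rule pd_local[OF openS]) (use e1 y in auto)
  also have "\<dots> = pd k (\<lambda>z. pd i ?F z * pd j ?F z) y + pd k (\<lambda>z. ?F z * pd i (pd j ?F) z) y"
    by (rule pd_add) (use sm_diff[OF sm y] in auto)
  also have "pd k (\<lambda>z. pd i ?F z * pd j ?F z) y = pd k (pd i ?F) y * pd j ?F y + pd i ?F y * pd k (pd j ?F) y"
    by (rule pd_mult) (use sm_diff[OF sm y] in auto)
  also have "pd k (\<lambda>z. ?F z * pd i (pd j ?F) z) y = pd k ?F y * pd i (pd j ?F) y + ?F y * pd k (pd i (pd j ?F)) y"
    by (rule pd_mult) (use sm_diff[OF sm y] in auto)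
  finally show ?thesis unfolding ct_def cA_def dl_def dH_def dT_def by (simp add: algebra_simps)
qed

lemma S4_like_iff:
  fixes L :: "real^'n::finite \<Rightarrow> real^'n \<Rightarrow> real"
  assumes fm: "finsler_metric U L"
  shows "S4_like U L \<longleftrightarrow> (\<forall>x\<in>U. \<forall>y. y \<noteq> 0 \<longrightarrow>
     S4g (ginv L x y) (cA (dl L x y) (L x y) (dH L x y) (dT L x y)) (hA (dl L x y) (L x y) (dH L x y)))"
proof -
  have S3e: "S3 L x y = S3g (ginv L x y) (ct L x y)" for x y
    by (intro ext) (simp add: S3_def S3g_def cmix_def)
  have Rice: "Sric L x y = Sricg (ginv L x y) (ct L x y)" for x y
    by (intro ext) (simp add: Sric_def Sricg_def S3e)
  have Sce: "Sscal L x y = Sscalg (ginv L x y) (ct L x y)" for x y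
    by (simp add: Sscal_def Sscalg_def Rice)
  have Mte: "Mt L x y = Mtg (ginv L x y) (ct L x y) (ht L x y)" for x y
    by (intro ext) (simp add: Mt_def Mtg_def Rice Sce)
  have "S4_like U L \<longleftrightarrow> (\<forall>x\<in>U. \<forall>y. y \<noteq> 0 \<longrightarrow> S4g (ginv L x y) (ct L x y) (ht L x y))"
    unfolding S4_like_def S4g_def wedge_def S3e Mte by simp
  also have "\<dots> \<longleftrightarrow> (\<forall>x\<in>U. \<forall>y. y \<noteq> 0 \<longrightarrow>
     S4g (ginv L x y) (cA (dl L x y) (L x y) (dH L x y) (dT L x y)) (hA (dl L x y) (L x y) (dH L x y)))"
  proof -
    have "ct L x y = cA (dl L x y) (L x y) (dH L x y) (dT L x y)" "ht L x y = hA (dl L x y) (L x y) (dH L x y)"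
      if "x \<in> U" "y \<noteq> 0" for x y
      using ct_eq[of L x y, OF finsler_sm[OF fm that(1)] that(2)] ht_eq[of L x y, OF finsler_sm[OF fm that(1)] that(2)]
      by (auto intro!: ext)
    then show ?thesis by auto
  qed
  finally show ?thesis .
qed


lemma Hsym_F:
  fixes F :: "real^'n::finite \<Rightarrow> real"
  assumes sm: "smF F" and y: "y \<noteq> 0"
  shows "pd a (pd b F) y = pd b (pd a F) y"
  by (rule clairaut[OF openS]) (use y in \<open>auto intro: sm_diff[OF sm] diff_cont\<close>)

lemma Tsym1_F:
  fixes F :: "real^'n::finite \<Rightarrow> real"
  assumes sm: "smF F" and y: "y \<noteq> 0"
  shows "pd a (pd b (pd d F)) y = pd b (pd a (pd d F)) y"
  by (rule clairaut[OF openS]) (use y in \<open>auto intro: sm_diff[OF sm] diff_cont\<close>)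

lemma Tsym2_F:
  fixes F :: "real^'n::finite \<Rightarrow> real"
  assumes sm: "smF F" and y: "y \<noteq> 0"
  shows "pd a (pd b (pd d F)) y = pd a (pd d (pd b F)) y"
  by (rule pd_local[OF openS]) (use y Hsym_F[OF sm] in auto)

lemma lin_diff: "(\<lambda>z::real^'n::finite. \<Sum>j\<in>UNIV. b j * z$j) differentiable (at y)"
proof -
  have "((\<lambda>z::real^'n. \<Sum>j\<in>UNIV. b j * z$j) has_derivative (\<lambda>h. \<Sum>j\<in>UNIV. b j * h$j)) (at y)"
    by (auto intro!: derivative_eq_intros bounded_linear_imp_has_derivative[OF bounded_linear_vec_nth])
  then show ?thesis unfolding differentiable_def by blast
qed

lemma hom0:
  fixes F :: "real^'n::finite \<Rightarrow> real"
  assumes sm: "smF F" and hom: "\<And>w. F (t *\<^sub>R w) = t * F w" and t: "t > 0"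
  shows "pd i F (t *\<^sub>R w) = pd i F w"
proof (cases "w = 0")
  case True then show ?thesis by simp
next
  case False
  have tw: "t *\<^sub>R w \<noteq> 0" using False t by simp
  have "t * pd i F (t *\<^sub>R w) = pd i (\<lambda>w. F (t *\<^sub>R w)) w"
    by (rule pd_scale_arg[symmetric]) (rule sm_diff(1)[OF sm tw])
  also have "\<dots> = pd i (\<lambda>w. t * F w) w" by (simp add: hom)
  also have "\<dots> = t * pd i F w" by (rule pd_cmult) (rule sm_diff(1)[OF sm False])
  finally show ?thesis using t by simp
qed

lemma homm1:
  fixes F :: "real^'n::finite \<Rightarrow> real"
  assumes sm: "smF F" and hom: "\<And>w t. t > 0 \<Longrightarrow> F (t *\<^sub>R w) = t * F w" and t: "t > 0" and y: "y \<noteq> 0"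
  shows "pd a (pd i F) (t *\<^sub>R y) = pd a (pd i F) y / t"
proof -
  have ty: "t *\<^sub>R y \<noteq> 0" using y t by simp
  have f: "(\<lambda>w. pd i F (t *\<^sub>R w)) = pd i F" using hom0[OF sm hom[OF t] t] by (intro ext) blast
  have "t * pd a (pd i F) (t *\<^sub>R y) = pd a (\<lambda>w. pd i F (t *\<^sub>R w)) y"
    by (rule pd_scale_arg[symmetric]) (rule sm_diff(2)[OF sm ty])
  also have "\<dots> = pd a (pd i F) y" by (simp add: f)
  finally show ?thesis using t by (simp add: field_simps)
qed

lemma matrix_inv_props:
  fixes A :: "real^'n::finite^'n"
  assumes "invertible A"
  shows "A ** matrix_inv A = mat 1" "matrix_inv A ** A = mat 1"
proof -
  have "\<exists>A'. A ** A' = mat 1 \<and> A' ** A = mat 1" using assms unfolding invertible_def .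
  then have "A ** matrix_inv A = mat 1 \<and> matrix_inv A ** A = mat 1"
    unfolding matrix_inv_def by (rule someI_ex)
  then show "A ** matrix_inv A = mat 1" "matrix_inv A ** A = mat 1" by auto
qed

lemma gmat_inv:
  fixes L :: "real^'n::finite \<Rightarrow> real^'n \<Rightarrow> real"
  assumes fm: "finsler_metric U L" and x: "x \<in> U" and y: "y \<noteq> 0"
  shows "invertible (gmat L x y)"
  unfolding invertible_left_inverse matrix_left_invertible_ker
proof (intro allI impI)
  fix v :: "real^'n" assume v: "gmat L x y *v v = 0"
  show "v = 0"
  proof (rule ccontr)
    assume "v \<noteq> 0"
    then have pos: "(\<Sum>i\<in>UNIV. \<Sum>j\<in>UNIV. gt L x y i j * v$i * v$j) > 0"
      using fm x y unfolding finsler_metric_def by blast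
    have "(\<Sum>i\<in>UNIV. \<Sum>j\<in>UNIV. gt L x y i j * v$i * v$j) = (\<Sum>i\<in>UNIV. v$i * (gmat L x y *v v)$i)"
      by (simp add: matrix_vector_mult_def gmat_def sum_distrib_left mult_ac)
    also have "\<dots> = 0" using v by simp
    finally show False using pos by simp
  qed
qed

lemma fd_of:
  fixes L :: "real^'n::finite \<Rightarrow> real^'n \<Rightarrow> real"
  assumes fm: "finsler_metric U L" and x: "x \<in> U" and y: "y \<noteq> 0"
  shows "fd y (L x y) (dl L x y) (dH L x y) (dT L x y) (ginv L x y)"
proof -
  let ?F = "L x"
  have sm: "smF ?F" by (rule finsler_sm[OF fm x])
  have hom: "\<And>w t. t > 0 \<Longrightarrow> ?F (t *\<^sub>R w) = t * ?F w" using fm x unfolding finsler_metric_def by blast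
  have Lpos: "L x y > 0" using fm x y unfolding finsler_metric_def by blast
  have Hs: "dH L x y i j = dH L x y j i" for i j unfolding dH_def by (rule Hsym_F[OF sm y])
  have T1: "dT L x y i j k = dT L x y j i k" for i j k unfolding dT_def by (rule Tsym1_F[OF sm y])
  have T2: "dT L x y i j k = dT L x y i k j" for i j k unfolding dT_def by (rule Tsym2_F[OF sm y])
  have El: "(\<Sum>i\<in>UNIV. dl L x y i * y$i) = L x y"
  proof -
    have d: "((\<lambda>t. t * ?F y) has_real_derivative ?F y) (at 1)" by (auto intro!: derivative_eq_intros)
    show ?thesis unfolding dl_def by (rule euler_gen[OF sm_diff(1)[OF sm y] _ d]) (simp add: hom)
  qed
  have EH: "(\<Sum>j\<in>UNIV. dH L x y i j * y$j) = 0" for i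
  proof -
    have d: "((\<lambda>t. pd i ?F y) has_real_derivative 0) (at 1)" by (auto intro!: derivative_eq_intros)
    have "(\<Sum>j\<in>UNIV. pd j (pd i ?F) y * y$j) = 0"
      by (rule euler_gen[OF sm_diff(2)[OF sm y] _ d]) (simp add: hom0[OF sm hom])
    then show ?thesis unfolding dH_def using Hsym_F[OF sm y] by simp
  qed
  have ET: "(\<Sum>k\<in>UNIV. dT L x y i j k * y$k) = - dH L x y i j" for i j
  proof -
    have d: "((\<lambda>t. pd i (pd j ?F) y / t) has_real_derivative - pd i (pd j ?F) y) (at 1)"
      by (auto intro!: derivative_eq_intros simp: power2_eq_square)
    have "(\<Sum>k\<in>UNIV. pd k (pd i (pd j ?F)) y * y$k) = - pd i (pd j ?F) y"
      by (rule euler_gen[OF sm_diff(3)[OF sm y] _ d]) (simp add: homm1[OF sm hom _ y])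
    moreover have "pd k (pd i (pd j ?F)) y = dT L x y i j k" for k
      using T1[of k i j] T2[of i k j] unfolding dT_def by simp
    ultimately show ?thesis unfolding dH_def by simp
  qed
  have inv: "invertible (gmat L x y)" by (rule gmat_inv[OF fm x y])
  have gm: "gmat L x y $ i $ j = gA (dl L x y) (L x y) (dH L x y) i j" for i j
    unfolding gmat_def using gt_eq[of L x y i j, OF sm y] by simp
  have GR: "(\<Sum>j\<in>UNIV. gA (dl L x y) (L x y) (dH L x y) i j * ginv L x y j k) = (if i = k then 1 else 0)" for i k
    using arg_cong[OF matrix_inv_props(1)[OF inv], of "\<lambda>A. A $ i $ k"]
    unfolding matrix_matrix_mult_def mat_def ginv_def by (simp add: gm)
  have GL: "(\<Sum>j\<in>UNIV. ginv L x y i j * gA (dl L x y) (L x y) (dH L x y) j k) = (if i = k then 1 else 0)" for i k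
    using arg_cong[OF matrix_inv_props(2)[OF inv], of "\<lambda>A. A $ i $ k"]
    unfolding matrix_matrix_mult_def mat_def ginv_def by (simp add: gm)
  show ?thesis
    by (unfold_locales) (use Lpos Hs T1 T2 El EH ET GR GL in auto)
qed


lemma star_rel:
  fixes L :: "real^'n::finite \<Rightarrow> real^'n \<Rightarrow> real"
    and c :: "real^'n \<Rightarrow> real" and b :: "real^'n \<Rightarrow> real^'n"
  assumes fm: "finsler_metric U L" and x: "x \<in> U" and y: "y \<noteq> 0"
  defines "L2 \<equiv> (\<lambda>x y. c x * L x y + (\<Sum>i\<in>UNIV. b x $ i * y $ i))"
  shows "dl L2 x y i = c x * dl L x y i + b x $ i"
    and "dH L2 x y i j = c x * dH L x y i j"
    and "dT L2 x y i j k = c x * dT L x y i j k"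
proof -
  let ?F = "L x" and ?S = "UNIV - {0::real^'n}"
  have sm: "smF ?F" by (rule finsler_sm[OF fm x])
  have d1: "pd i (L2 x) z = c x * pd i ?F z + b x $ i" if "z \<noteq> 0" for z i
  proof -
    have "pd i (L2 x) z = pd i (\<lambda>z. c x * ?F z) z + pd i (\<lambda>z. \<Sum>j\<in>UNIV. b x $ j * z $ j) z"
      unfolding L2_def by (rule pd_add) (use sm_diff(1)[OF sm that] lin_diff in auto)
    also have "\<dots> = c x * pd i ?F z + b x $ i"
      using pd_cmult[OF sm_diff(1)[OF sm that]] pd_lin by simp
    finally show ?thesis .
  qed
  show "dl L2 x y i = c x * dl L x y i + b x $ i" unfolding dl_def using d1[OF y] .
  have d2: "pd i (pd j (L2 x)) z = c x * pd i (pd j ?F) z" if "z \<noteq> 0" for z i j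
  proof -
    have "pd i (pd j (L2 x)) z = pd i (\<lambda>z. c x * pd j ?F z + b x $ j) z"
      by (rule pd_local[OF openS]) (use that d1 in auto)
    also have "\<dots> = pd i (\<lambda>z. c x * pd j ?F z) z + pd i (\<lambda>z. b x $ j) z"
      by (rule pd_add) (use sm_diff(2)[OF sm that] in auto)
    also have "\<dots> = c x * pd i (pd j ?F) z"
      using pd_cmult[OF sm_diff(2)[OF sm that]] pd_const by simp
    finally show ?thesis .
  qed
  show "dH L2 x y i j = c x * dH L x y i j" unfolding dH_def using d2[OF y] .
  have "pd i (pd j (pd k (L2 x))) y = pd i (\<lambda>z. c x * pd j (pd k ?F) z) y"
    by (rule pd_local[OF openS]) (use y d2 in auto)
  also have "\<dots> = c x * pd i (pd j (pd k ?F)) y"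
    by (rule pd_cmult) (use sm_diff(3)[OF sm y] in auto)
  finally show "dT L2 x y i j k = c x * dT L x y i j k" unfolding dT_def .
qed

theorem theorem2:
  fixes U :: "(real^'n::finite) set"
    and L :: "real^'n \<Rightarrow> real^'n \<Rightarrow> real"
    and \<sigma> :: "real^'n \<Rightarrow> real"
    and b :: "real^'n \<Rightarrow> real^'n"
  assumes "CARD('n) > 4"
    and "open U"
    and "finsler_metric U L"
    and "smooth_on U \<sigma>"
    and "\<And>i. smooth_on U (\<lambda>x. b x $ i)"
    and "finsler_metric U (\<lambda>x y. exp (\<sigma> x) * L x y + (\<Sum>i\<in>UNIV. b x $ i * y $ i))"
  shows "S4_like U L \<longleftrightarrow> S4_like U (\<lambda>x y. exp (\<sigma> x) * L x y + (\<Sum>i\<in>UNIV. b x $ i * y $ i))"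
proof -
  define L2 where "L2 = (\<lambda>x y. exp (\<sigma> x) * L x y + (\<Sum>i\<in>UNIV. b x $ i * y $ i))"
  have fm: "finsler_metric U L" by fact
  have fm2: "finsler_metric U L2" unfolding L2_def by fact
  have n: "real CARD('n) > 4" using assms(1) by simp
  have pw: "S4g (ginv L x y) (cA (dl L x y) (L x y) (dH L x y) (dT L x y)) (hA (dl L x y) (L x y) (dH L x y))
      \<longleftrightarrow> S4g (ginv L2 x y) (cA (dl L2 x y) (L2 x y) (dH L2 x y) (dT L2 x y)) (hA (dl L2 x y) (L2 x y) (dH L2 x y))"
    if x: "x \<in> U" and y: "y \<noteq> 0" for x y
  proof -
    let ?c = "exp (\<sigma> x)"
    have r1: "dl L2 x y i = ?c * dl L x y i + b x $ i" for i
      using star_rel(1)[OF fm x y, where c = "\<lambda>x. exp (\<sigma> x)" and b = b] unfolding L2_def .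
    have r2: "dH L2 x y i j = ?c * dH L x y i j" for i j
      using star_rel(2)[OF fm x y, where c = "\<lambda>x. exp (\<sigma> x)" and b = b] unfolding L2_def .
    have r3: "dT L2 x y i j k = ?c * dT L x y i j k" for i j k
      using star_rel(3)[OF fm x y, where c = "\<lambda>x. exp (\<sigma> x)" and b = b] unfolding L2_def .
    have r0: "L2 x y = ?c * L x y + (\<Sum>i\<in>UNIV. b x $ i * y $ i)" unfolding L2_def by simp
    have f1: "fd y (L x y) (dl L x y) (dH L x y) (dT L x y) (ginv L x y)" by (rule fd_of[OF fm x y])
    have f2: "fd y (L2 x y) (dl L2 x y) (dH L2 x y) (dT L2 x y) (ginv L2 x y)" by (rule fd_of[OF fm2 x y])
    have A: "fd2 y (L x y) (dl L x y) (dH L x y) (dT L x y) (ginv L x y)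
                 (L2 x y) (dl L2 x y) (dH L2 x y) (dT L2 x y) (ginv L2 x y) ?c (\<lambda>i. b x $ i)"
      unfolding fd2_def fd2_axioms_def using f1 f2 r0 r1 r2 r3 by simp
    have cnz: "?c \<noteq> 0" by simp
    have s0: "(\<Sum>i\<in>UNIV. - b x $ i / ?c * y $ i) = - (\<Sum>i\<in>UNIV. b x $ i * y $ i) / ?c"
    proof -
      have "(\<Sum>i\<in>UNIV. - b x $ i / ?c * y $ i) = (\<Sum>i\<in>UNIV. (b x $ i * y $ i) * (- 1 / ?c))"
        by (intro sum.cong refl) simp
      also have "\<dots> = (\<Sum>i\<in>UNIV. b x $ i * y $ i) * (- 1 / ?c)" by (simp only: sum_distrib_right)
      finally show ?thesis by simp
    qed
    have B: "fd2 y (L2 x y) (dl L2 x y) (dH L2 x y) (dT L2 x y) (ginv L2 x y)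
                 (L x y) (dl L x y) (dH L x y) (dT L x y) (ginv L x y) (1 / ?c) (\<lambda>i. - b x $ i / ?c)"
      apply (rule fd2.intro[OF f2 f1])
      apply (rule fd2_axioms.intro)
          apply simp
         apply (simp only: s0 r0, use cnz in \<open>simp add: field_simps\<close>)
        apply (simp add: r1 field_simps)
       apply (simp add: r2 field_simps)
      apply (simp add: r3 field_simps)
      done
    show ?thesis using fd2.transfer[OF A n] fd2.transfer[OF B n] by blast
  qed
  have "S4_like U L \<longleftrightarrow> (\<forall>x\<in>U. \<forall>y. y \<noteq> 0 \<longrightarrow>
     S4g (ginv L x y) (cA (dl L x y) (L x y) (dH L x y) (dT L x y)) (hA (dl L x y) (L x y) (dH L x y)))"
    by (rule S4_like_iff[OF fm])
  also have "\<dots> \<longleftrightarrow> (\<forall>x\<in>U. \<forall>y. y \<noteq> 0 \<longrightarrow>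
     S4g (ginv L2 x y) (cA (dl L2 x y) (L2 x y) (dH L2 x y) (dT L2 x y)) (hA (dl L2 x y) (L2 x y) (dH L2 x y)))"
    using pw by blast
  also have "\<dots> \<longleftrightarrow> S4_like U L2"
    by (rule S4_like_iff[OF fm2, symmetric])
  finally show ?thesis unfolding L2_def .
qed


end
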